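(* Let $J\subset\mathbb{R}$ be a compact interval, $c$ an endpoint of $J$, and let $f=\sum_{k\ge k_0}c_kg_k\in C^\infty(J)$ be a series satisfying conditions (i)–(iii) below (so $f$ is pliable at $c$). Then: (a) the partial sums $\sum_{k=k_0}^l c_kg_k$ converge to $f$ in the $C^r$ norm for each $r\in\mathbb{Z}_{\ge0}$; (b) for each $r\in\mathbb{Z}_{\ge0}$, $f^{(r)}(c)=0$ and $f^{(r)}=\sum_{k\ge k_0}c_kg_k^{(r)}$ is a series satisfying (i)–(iii), so $f^{(r)}$ is pliable at $c$; (c) $hf+g$ is pliable at $c$ for every $h,g\in C^\infty(J)$ with $\mathrm{supp}\,g\subset J\setminus\{c\}$; (d) $f\circ\iota$ is pliable at $\iota^{-1}(c)$ for each isometry $\iota$ of $\mathbb{R}$; (e) if $d\colon K\to J$ is a diffeomorphism from a compact interval $K$, then $f\circ d$ is pliable at $d^{-1}(c)$.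
   Context: A sequence $(a_k)$ grows at most exponentially if $(2^{k\gamma}a_k)$ is bounded for some $\gamma\in\mathbb{R}$; $(a_k)$ converges super-exponentially to $a$ if $2^{k\gamma}(a_k-a)\to0$ for every $\gamma\in\mathbb{R}$. The $C^r$ norm is $\|u\|_r=\sum_{i=0}^r\max|u^{(i)}|$. Given $k_0\in\mathbb{Z}$ and an endpoint $c$ of a compact interval $J$, $f\in C^\infty(J)$ is pliable at $c$ if $f=\sum_{k\ge k_0}c_kg_k$ where (i) $(c_k)$ is a sequence of positive reals converging super-exponentially to $0$; (ii) $g_k\in C^\infty(J)$, $\{\mathrm{supp}\,g_k\}_{k\ge k_0}$ is a locally finite family of compact subsets of $J\setminus\{c\}$, and for every $r$ the sequence of $C^r$ norms of $g_k$ grows at most exponentially; (iii) there is $L>0$ such that whenever $0<2\varepsilon<$ length of $J$ and $J_\varepsilon$ is the set of indices $k$ for which $\mathrm{supp}\,g_k$ meets $\{x\in J:\varepsilon\le|x-c|\le2\varepsilon\}$, then $J_\varepsilon$ has at most $L$ elements and $2^{-kL}\le\varepsilon$ for every $k\in J_\varepsilon$. *)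

theory Defs
  imports "HOL-Analysis.Analysis"
begin

definition jderiv :: "real set \<Rightarrow> (real \<Rightarrow> real) \<Rightarrow> real \<Rightarrow> real" where
  "jderiv J u x = (THE D. (u has_real_derivative D) (at x within J))"

definition jderivs :: "real set \<Rightarrow> nat \<Rightarrow> (real \<Rightarrow> real) \<Rightarrow> real \<Rightarrow> real" where
  "jderivs J n u = ((\<lambda>v. jderiv J v) ^^ n) u"

definition smooth_on_J :: "real set \<Rightarrow> (real \<Rightarrow> real) \<Rightarrow> bool" where
  "smooth_on_J J u \<longleftrightarrow>
     (\<forall>n. \<forall>x\<in>J. (jderivs J n u has_real_derivative jderivs J (Suc n) u x) (at x within J))"

definition cr_norm :: "real set \<Rightarrow> nat \<Rightarrow> (real \<Rightarrow> real) \<Rightarrow> real" where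
  "cr_norm J r u = (\<Sum>i\<le>r. Sup ((\<lambda>x. \<bar>jderivs J i u x\<bar>) ` J))"

definition jsupp :: "real set \<Rightarrow> (real \<Rightarrow> real) \<Rightarrow> real set" where
  "jsupp J u = closure {x\<in>J. u x \<noteq> 0}"

definition grows_at_most_exp :: "int \<Rightarrow> (int \<Rightarrow> real) \<Rightarrow> bool" where
  "grows_at_most_exp k0 a \<longleftrightarrow>
     (\<exists>\<gamma>::real. \<exists>B. \<forall>k\<ge>k0. \<bar>2 powr (real_of_int k * \<gamma>) * a k\<bar> \<le> B)"

definition superexp_conv :: "(int \<Rightarrow> real) \<Rightarrow> real \<Rightarrow> bool" where
  "superexp_conv a l \<longleftrightarrow>
     (\<forall>\<gamma>::real. ((\<lambda>k. 2 powr (real_of_int k * \<gamma>) * (a k - l)) \<longlongrightarrow> 0) at_top)"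

definition pliable_series ::
  "real \<Rightarrow> real \<Rightarrow> real \<Rightarrow> int \<Rightarrow> (int \<Rightarrow> real) \<Rightarrow> (int \<Rightarrow> real \<Rightarrow> real) \<Rightarrow> bool" where
  "pliable_series a b c k0 cs gs \<longleftrightarrow>
     \<comment> \<open>(i)\<close>
     (\<forall>k\<ge>k0. cs k > 0) \<and> superexp_conv cs 0 \<and>
     \<comment> \<open>(ii)\<close>
     (\<forall>k\<ge>k0. smooth_on_J {a..b} (gs k) \<and> compact (jsupp {a..b} (gs k)) \<and>
                jsupp {a..b} (gs k) \<subseteq> {a..b} - {c}) \<and>
     (\<forall>x\<in>{a..b} - {c}. \<exists>e>0. finite {k. k \<ge> k0 \<and> jsupp {a..b} (gs k) \<inter> ball x e \<noteq> {}}) \<and>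
     (\<forall>r. grows_at_most_exp k0 (\<lambda>k. cr_norm {a..b} r (gs k))) \<and>
     \<comment> \<open>(iii)\<close>
     (\<exists>L::real. L > 0 \<and>
        (\<forall>\<epsilon>::real. 0 < 2 * \<epsilon> \<and> 2 * \<epsilon> < b - a \<longrightarrow>
           (let J\<epsilon> = {k. k \<ge> k0 \<and>
                     jsupp {a..b} (gs k) \<inter> {x\<in>{a..b}. \<epsilon> \<le> \<bar>x - c\<bar> \<and> \<bar>x - c\<bar> \<le> 2 * \<epsilon>} \<noteq> {}}
            in finite J\<epsilon> \<and> real (card J\<epsilon>) \<le> L \<and>
               (\<forall>k\<in>J\<epsilon>. 2 powr (- (real_of_int k * L)) \<le> \<epsilon>))))"

definition pliable :: "real set \<Rightarrow> real \<Rightarrow> (real \<Rightarrow> real) \<Rightarrow> bool" where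
  "pliable J c f \<longleftrightarrow>
     (\<exists>a b. a < b \<and> J = {a..b} \<and> (c = a \<or> c = b) \<and> smooth_on_J J f \<and>
        (\<exists>k0 cs gs. pliable_series a b c k0 cs gs \<and>
           (\<forall>x\<in>J. ((\<lambda>k. cs k * gs k x) has_sum f x) {k0..})))"

definition diffeo_J :: "real set \<Rightarrow> real set \<Rightarrow> (real \<Rightarrow> real) \<Rightarrow> bool" where
  "diffeo_J K J d \<longleftrightarrow> bij_betw d K J \<and> smooth_on_J K d \<and> smooth_on_J J (the_inv_into K d)"

end

theory Submission
  imports Defs
begin

lemma at_Icc_nontriv: "(a::real) < b \<Longrightarrow> x \<in> {a..b} \<Longrightarrow> at x within {a..b} \<noteq> bot"
  using trivial_limit_within[of x "{a..b}"] islimpt_Icc[of a b x] by auto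

lemma jderiv_eqI:
  assumes "(a::real) < b" "x \<in> {a..b}" "(u has_real_derivative D) (at x within {a..b})"
  shows "jderiv {a..b} u x = D"
  unfolding jderiv_def
proof (rule the_equality)
  show "(u has_real_derivative D) (at x within {a..b})" by fact
  fix D' assume "(u has_real_derivative D') (at x within {a..b})"
  then show "D' = D" using has_field_derivative_unique assms at_Icc_nontriv by blast
qed

lemma jderivs_0[simp]: "jderivs J 0 u = u" by (simp add: jderivs_def)
lemma jderivs_Suc: "jderivs J (Suc n) u = jderiv J (jderivs J n u)"
  by (simp add: jderivs_def)
lemma jderivs_add: "jderivs J m (jderivs J n u) = jderivs J (m+n) u"
  by (simp add: jderivs_def funpow_add)

lemma smooth_D:
  "smooth_on_J J u \<Longrightarrow> x \<in> J \<Longrightarrow> (jderivs J n u has_real_derivative jderivs J (Suc n) u x) (at x within J)"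
  by (simp add: smooth_on_J_def)

lemma smooth_jderivs: "smooth_on_J J u \<Longrightarrow> smooth_on_J J (jderivs J n u)"
  unfolding smooth_on_J_def jderivs_add by (metis add_Suc)

lemma smooth_cont: "smooth_on_J J u \<Longrightarrow> continuous_on J (jderivs J n u)"
  by (meson DERIV_continuous continuous_at_imp_continuous_on continuous_on_eq_continuous_within smooth_D)

lemma smooth_cont0: "smooth_on_J J u \<Longrightarrow> continuous_on J u"
  using smooth_cont[of J u 0] by simp

lemma smooth_by_rep:
  assumes ab: "(a::real) < b"
    and R: "\<And>n x. x \<in> {a..b} \<Longrightarrow> (R n has_real_derivative R (Suc n) x) (at x within {a..b})"
    and u: "\<And>x. x \<in> {a..b} \<Longrightarrow> u x = R 0 x"
  shows "smooth_on_J {a..b} u \<and> (\<forall>n. \<forall>x\<in>{a..b}. jderivs {a..b} n u x = R n x)"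
proof -
  have eq: "\<forall>x\<in>{a..b}. jderivs {a..b} n u x = R n x" for n
  proof (induction n)
    case 0 then show ?case using u by simp
  next
    case (Suc n)
    show ?case
    proof
      fix x assume x: "x \<in> {a..b}"
      have "(jderivs {a..b} n u has_real_derivative R (Suc n) x) (at x within {a..b})"
        by (rule has_field_derivative_transform_within[OF R[OF x] zero_less_one x]) (use Suc in auto)
      then show "jderivs {a..b} (Suc n) u x = R (Suc n) x"
        unfolding jderivs_Suc using jderiv_eqI[OF ab x] by blast
    qed
  qed
  have "smooth_on_J {a..b} u"
    unfolding smooth_on_J_def
  proof (intro allI ballI)
    fix n x assume x: "x \<in> {a..b}"
    have "(jderivs {a..b} n u has_real_derivative R (Suc n) x) (at x within {a..b})"
      by (rule has_field_derivative_transform_within[OF R[OF x] zero_less_one x]) (use eq in auto)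
    then show "(jderivs {a..b} n u has_real_derivative jderivs {a..b} (Suc n) u x) (at x within {a..b})"
      using eq x by simp
  qed
  then show ?thesis using eq by blast
qed

lemma smooth_cong:
  assumes "(a::real) < b" "smooth_on_J {a..b} u" "\<And>x. x \<in> {a..b} \<Longrightarrow> v x = u x"
  shows "smooth_on_J {a..b} v \<and> (\<forall>n. \<forall>x\<in>{a..b}. jderivs {a..b} n v x = jderivs {a..b} n u x)"
  by (rule smooth_by_rep[OF assms(1)]) (use assms smooth_D in auto)

lemma smooth_lin:
  assumes ab: "(a::real) < b" and u: "smooth_on_J {a..b} u" and v: "smooth_on_J {a..b} v"
  shows "smooth_on_J {a..b} (\<lambda>x. \<alpha> * u x + \<beta> * v x) \<and>
    (\<forall>n. \<forall>x\<in>{a..b}. jderivs {a..b} n (\<lambda>x. \<alpha> * u x + \<beta> * v x) x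
        = \<alpha> * jderivs {a..b} n u x + \<beta> * jderivs {a..b} n v x)"
  by (rule smooth_by_rep[OF ab, where R="\<lambda>n x. \<alpha> * jderivs {a..b} n u x + \<beta> * jderivs {a..b} n v x"])
     (auto intro!: derivative_eq_intros smooth_D[OF u] smooth_D[OF v])

lemma smooth_const:
  assumes ab: "(a::real) < b"
  shows "smooth_on_J {a..b} (\<lambda>x. C) \<and> (\<forall>n. \<forall>x\<in>{a..b}. jderivs {a..b} n (\<lambda>x. C) x = (if n = 0 then C else 0))"
  by (rule smooth_by_rep[OF ab, where R="\<lambda>n x. if n = 0 then C else 0"]) (auto intro!: derivative_eq_intros)

lemma smooth_affine:
  assumes ab: "(a::real) < b"
  shows "smooth_on_J {a..b} (\<lambda>x. s * x + t)"
  by (rule smooth_by_rep[OF ab, where R="\<lambda>n x. if n = 0 then s * x + t else if n = 1 then s else 0", THEN conjunct1])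
     (auto intro!: derivative_eq_intros)

lemma smooth_sum:
  assumes ab: "(a::real) < b" and fin: "finite F" and u: "\<And>k. k \<in> F \<Longrightarrow> smooth_on_J {a..b} (g k)"
  shows "smooth_on_J {a..b} (\<lambda>x. \<Sum>k\<in>F. c k * g k x) \<and>
    (\<forall>n. \<forall>x\<in>{a..b}. jderivs {a..b} n (\<lambda>x. \<Sum>k\<in>F. c k * g k x) x = (\<Sum>k\<in>F. c k * jderivs {a..b} n (g k) x))"
  by (rule smooth_by_rep[OF ab, where R="\<lambda>n x. \<Sum>k\<in>F. c k * jderivs {a..b} n (g k) x"])
     (auto intro!: derivative_eq_intros smooth_D[OF u] simp: mult.commute)

lemma bool_lists_Suc:
  "{t::bool list. length t = Suc n} = (\<lambda>t. True # t) ` {t. length t = n} \<union> (\<lambda>t. False # t) ` {t. length t = n}"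
  by (auto simp: length_Suc_conv)

lemma sum_bool_lists_Suc:
  "(\<Sum>t\<in>{t::bool list. length t = Suc n}. F t) = (\<Sum>t\<in>{t. length t = n}. F (True # t) + F (False # t))"
proof -
  have fin: "finite {t::bool list. length t = n}" by (rule finite_list_length)
  have "(\<Sum>t\<in>{t::bool list. length t = Suc n}. F t) =
     (\<Sum>t\<in>(\<lambda>t. True # t) ` {t. length t = n}. F t) + (\<Sum>t\<in>(\<lambda>t. False # t) ` {t. length t = n}. F t)"
    unfolding bool_lists_Suc by (rule sum.union_disjoint) (use fin in auto)
  also have "\<dots> = (\<Sum>t\<in>{t. length t = n}. F (True # t)) + (\<Sum>t\<in>{t. length t = n}. F (False # t))"
    by (subst sum.reindex, simp add: inj_on_def)+ (simp add: o_def)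
  finally show ?thesis by (simp add: sum.distrib)
qed

lemma card_bool_lists: "card {t::bool list. length t = n} = 2 ^ n"
  using card_lists_length_eq[of "UNIV :: bool set" n] by simp

definition prodR :: "real set \<Rightarrow> (real \<Rightarrow> real) \<Rightarrow> (real \<Rightarrow> real) \<Rightarrow> nat \<Rightarrow> real \<Rightarrow> real" where
  "prodR J u v n x = (\<Sum>t\<in>{t::bool list. length t = n}.
      jderivs J (count_list t True) u x * jderivs J (count_list t False) v x)"

lemma smooth_mult:
  assumes ab: "(a::real) < b" and u: "smooth_on_J {a..b} u" and v: "smooth_on_J {a..b} v"
  shows "smooth_on_J {a..b} (\<lambda>x. u x * v x) \<and>
    (\<forall>n. \<forall>x\<in>{a..b}. jderivs {a..b} n (\<lambda>x. u x * v x) x = prodR {a..b} u v n x)"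
proof (rule smooth_by_rep[OF ab])
  fix n x assume x: "x \<in> {a..b}"
  have "(prodR {a..b} u v n has_real_derivative
      (\<Sum>t\<in>{t::bool list. length t = n}.
         jderivs {a..b} (Suc (count_list t True)) u x * jderivs {a..b} (count_list t False) v x
       + jderivs {a..b} (count_list t True) u x * jderivs {a..b} (Suc (count_list t False)) v x))
     (at x within {a..b})"
    unfolding prodR_def
    by (intro DERIV_sum) (auto intro!: derivative_eq_intros smooth_D[OF u x] smooth_D[OF v x] simp: mult.commute)
  also have "(\<Sum>t\<in>{t::bool list. length t = n}.
         jderivs {a..b} (Suc (count_list t True)) u x * jderivs {a..b} (count_list t False) v x
       + jderivs {a..b} (count_list t True) u x * jderivs {a..b} (Suc (count_list t False)) v x)
     = prodR {a..b} u v (Suc n) x"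
    unfolding prodR_def sum_bool_lists_Suc by simp
  finally show "(prodR {a..b} u v n has_real_derivative prodR {a..b} u v (Suc n) x) (at x within {a..b})" .
next
  fix x show "u x * v x = prodR {a..b} u v 0 x" by (simp add: prodR_def)
qed

lemma sup_abs_le:
  fixes v :: "real \<Rightarrow> real"
  assumes "continuous_on {a..b} v" "x \<in> {a..b::real}"
  shows "\<bar>v x\<bar> \<le> Sup ((\<lambda>x. \<bar>v x\<bar>) ` {a..b})"
proof (rule cSUP_upper)
  show "x \<in> {a..b}" using assms by auto
  have "compact ((\<lambda>x. \<bar>v x\<bar>) ` {a..b})"
    by (intro compact_continuous_image continuous_intros assms) auto
  then show "bdd_above ((\<lambda>x. \<bar>v x\<bar>) ` {a..b})"
    by (simp add: bounded_imp_bdd_above compact_imp_bounded)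
qed

lemma sup_abs_least:
  fixes v :: "real \<Rightarrow> real"
  assumes "(a::real) \<le> b" "\<And>x. x \<in> {a..b} \<Longrightarrow> \<bar>v x\<bar> \<le> M"
  shows "Sup ((\<lambda>x. \<bar>v x\<bar>) ` {a..b}) \<le> M"
  by (rule cSUP_least) (use assms in auto)

lemma sup_abs_nonneg:
  fixes v :: "real \<Rightarrow> real"
  assumes "continuous_on {a..b} v" "(a::real) \<le> b"
  shows "0 \<le> Sup ((\<lambda>x. \<bar>v x\<bar>) ` {a..b})"
  using sup_abs_le[OF assms(1), of a] assms(2) by (meson abs_ge_zero atLeastAtMost_iff order.trans order_refl)

lemma cr_norm_nonneg:
  assumes "smooth_on_J {a..b} u" "(a::real) \<le> b"
  shows "0 \<le> cr_norm {a..b} r u"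
  unfolding cr_norm_def by (intro sum_nonneg sup_abs_nonneg smooth_cont assms)

lemma cr_norm_mono:
  assumes "smooth_on_J {a..b} u" "(a::real) \<le> b" "r \<le> s"
  shows "cr_norm {a..b} r u \<le> cr_norm {a..b} s u"
  unfolding cr_norm_def using assms
  by (intro sum_mono2) (auto intro!: sup_abs_nonneg smooth_cont)

lemma cr_norm_ge:
  assumes "smooth_on_J {a..b} u" "i \<le> r" "x \<in> {a..b::real}"
  shows "\<bar>jderivs {a..b} i u x\<bar> \<le> cr_norm {a..b} r u"
proof -
  have ab: "a \<le> b" using assms by auto
  have "\<bar>jderivs {a..b} i u x\<bar> \<le> Sup ((\<lambda>x. \<bar>jderivs {a..b} i u x\<bar>) ` {a..b})"
    by (intro sup_abs_le smooth_cont assms)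
  also have "\<dots> = (\<Sum>j\<in>{i}. Sup ((\<lambda>x. \<bar>jderivs {a..b} j u x\<bar>) ` {a..b}))" by simp
  also have "\<dots> \<le> cr_norm {a..b} r u"
    unfolding cr_norm_def using assms ab
    by (intro sum_mono2) (auto intro!: sup_abs_nonneg smooth_cont)
  finally show ?thesis .
qed

lemma cr_norm_le:
  assumes "(a::real) \<le> b" "\<And>i x. i \<le> r \<Longrightarrow> x \<in> {a..b} \<Longrightarrow> \<bar>jderivs {a..b} i u x\<bar> \<le> M"
  shows "cr_norm {a..b} r u \<le> (real r + 1) * M"
proof -
  have "cr_norm {a..b} r u \<le> (\<Sum>i\<le>r. M)"
    unfolding cr_norm_def by (intro sum_mono sup_abs_least) (use assms in auto)
  then show ?thesis by (simp add: algebra_simps)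
qed

lemma cr_norm_jderivs:
  assumes "smooth_on_J {a..b} u" "(a::real) \<le> b"
  shows "cr_norm {a..b} s (jderivs {a..b} r u) \<le> cr_norm {a..b} (s + r) u"
proof -
  have "cr_norm {a..b} s (jderivs {a..b} r u) = (\<Sum>i\<in>(\<lambda>i. i + r) ` {..s}. Sup ((\<lambda>x. \<bar>jderivs {a..b} i u x\<bar>) ` {a..b}))"
    unfolding cr_norm_def jderivs_add by (subst sum.reindex) (auto simp: o_def)
  also have "\<dots> \<le> cr_norm {a..b} (s + r) u"
    unfolding cr_norm_def using assms
    by (intro sum_mono2) (auto intro!: sup_abs_nonneg smooth_cont)
  finally show ?thesis .
qed

lemma cr_norm_mult:
  assumes ab: "(a::real) < b" and u: "smooth_on_J {a..b} u" and v: "smooth_on_J {a..b} v"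
  shows "cr_norm {a..b} r (\<lambda>x. u x * v x) \<le> (real r + 1) * (2 ^ r * cr_norm {a..b} r u * cr_norm {a..b} r v)"
proof (rule cr_norm_le)
  show "a \<le> b" using ab by simp
  fix i x assume i: "i \<le> r" and x: "x \<in> {a..b}"
  have nu: "0 \<le> cr_norm {a..b} r u" and nv: "0 \<le> cr_norm {a..b} r v"
    using cr_norm_nonneg u v ab by auto
  have "\<bar>jderivs {a..b} i (\<lambda>x. u x * v x) x\<bar> = \<bar>prodR {a..b} u v i x\<bar>"
    using smooth_mult[OF ab u v] x by simp
  also have "\<dots> \<le> (\<Sum>t\<in>{t::bool list. length t = i}. cr_norm {a..b} r u * cr_norm {a..b} r v)"
    unfolding prodR_def
  proof (rule order.trans[OF sum_abs], rule sum_mono)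
    fix t :: "bool list" assume t: "t \<in> {t. length t = i}"
    have "count_list t True \<le> r" "count_list t False \<le> r"
      using count_le_length[of t] t i by (auto intro: order.trans)
    then show "\<bar>jderivs {a..b} (count_list t True) u x * jderivs {a..b} (count_list t False) v x\<bar>
        \<le> cr_norm {a..b} r u * cr_norm {a..b} r v"
      unfolding abs_mult using x nu
      by (intro mult_mono cr_norm_ge u v) auto
  qed
  also have "\<dots> = 2 ^ i * (cr_norm {a..b} r u * cr_norm {a..b} r v)"
    by (simp add: card_bool_lists)
  also have "\<dots> \<le> 2 ^ r * cr_norm {a..b} r u * cr_norm {a..b} r v"
    using i nu nv by (simp add: mult.assoc mult_right_mono)
  finally show "\<bar>jderivs {a..b} i (\<lambda>x. u x * v x) x\<bar> \<le> 2 ^ r * cr_norm {a..b} r u * cr_norm {a..b} r v" .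
qed

lemma jsupp_subset': "jsupp {a..b::real} u \<subseteq> {a..b}"
  unfolding jsupp_def by (intro closure_minimal) auto

lemma compact_jsupp: "compact (jsupp {a..b::real} u)"
proof -
  have c: "closed (jsupp {a..b::real} u)" unfolding jsupp_def by (rule closed_closure)
  have "bounded (jsupp {a..b::real} u)"
    by (rule bounded_subset[OF compact_imp_bounded[OF compact_Icc] jsupp_subset'])
  with c show ?thesis unfolding compact_eq_bounded_closed by (intro conjI)
qed

lemma not_jsupp_zero: "x \<in> J \<Longrightarrow> x \<notin> jsupp J u \<Longrightarrow> u x = 0"
proof (rule ccontr)
  assume a: "x \<in> J" "x \<notin> jsupp J u" "u x \<noteq> 0"
  then have "x \<in> {x\<in>J. u x \<noteq> 0}" by simp
  then have "x \<in> jsupp J u" unfolding jsupp_def by (rule closure_subset[THEN subsetD])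
  with a show False by simp
qed

lemma jsupp_jderiv:
  assumes ab: "(a::real) < b"
  shows "jsupp {a..b} (jderiv {a..b} u) \<subseteq> jsupp {a..b} u"
proof -
  have "{x\<in>{a..b}. jderiv {a..b} u x \<noteq> 0} \<subseteq> jsupp {a..b} u"
  proof (rule subsetI, rule ccontr)
    fix x assume x: "x \<in> {x\<in>{a..b}. jderiv {a..b} u x \<noteq> 0}" and nx: "x \<notin> jsupp {a..b} u"
    have "open (- jsupp {a..b} u)" unfolding jsupp_def by auto
    then obtain e where e: "e > 0" "ball x e \<subseteq> - jsupp {a..b} u"
      using nx open_contains_ball by blast
    have "((\<lambda>_. 0) has_real_derivative 0) (at x within {a..b})" by simp
    then have "(u has_real_derivative 0) (at x within {a..b})"
    proof (rule has_field_derivative_transform_within[OF _ e(1)])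
      show "x \<in> {a..b}" using x by simp
      fix y assume y: "y \<in> {a..b}" "dist y x < e"
      then have "y \<notin> jsupp {a..b} u" using e(2) by (auto simp: dist_commute)
      then show "0 = u y" using not_jsupp_zero y by metis
    qed
    then have "jderiv {a..b} u x = 0" using jderiv_eqI ab x by blast
    then show False using x by simp
  qed
  then show ?thesis unfolding jsupp_def[of _ "jderiv _ u"]
    by (intro closure_minimal) (auto simp: jsupp_def)
qed

lemma jsupp_jderivs:
  assumes ab: "(a::real) < b"
  shows "jsupp {a..b} (jderivs {a..b} r u) \<subseteq> jsupp {a..b} u"
  by (induction r) (auto simp: jderivs_Suc dest!: jsupp_jderiv[OF ab, THEN subsetD])

lemma jsupp_mult: "jsupp J (\<lambda>x. h x * g x) \<subseteq> jsupp J g"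
  unfolding jsupp_def by (rule closure_mono) auto

lemma jsupp_add: "jsupp J (\<lambda>x. u x + v x) \<subseteq> jsupp J u \<union> jsupp J v"
  unfolding jsupp_def closure_Un[symmetric] by (rule closure_mono) auto

lemma jsupp_zero: "jsupp J (\<lambda>x. 0) = {}"
  unfolding jsupp_def by simp

lemma smooth_diff:
  assumes ab: "(a::real) < b" and u: "smooth_on_J {a..b} u" and v: "smooth_on_J {a..b} v"
  shows "smooth_on_J {a..b} (\<lambda>x. u x - v x) \<and>
    (\<forall>n. \<forall>x\<in>{a..b}. jderivs {a..b} n (\<lambda>x. u x - v x) x = jderivs {a..b} n u x - jderivs {a..b} n v x)"
  by (rule smooth_by_rep[OF ab, where R="\<lambda>n x. jderivs {a..b} n u x - jderivs {a..b} n v x"])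
     (auto intro!: derivative_eq_intros smooth_D[OF u] smooth_D[OF v])

definition ser_ii :: "real \<Rightarrow> real \<Rightarrow> real \<Rightarrow> int \<Rightarrow> (int \<Rightarrow> real) \<Rightarrow> (int \<Rightarrow> real \<Rightarrow> real) \<Rightarrow> bool" where
  "ser_ii a b c k0 cs gs \<longleftrightarrow>
     (\<forall>k\<ge>k0. cs k > 0) \<and> superexp_conv cs 0 \<and>
     (\<forall>k\<ge>k0. smooth_on_J {a..b} (gs k) \<and> compact (jsupp {a..b} (gs k)) \<and>
                jsupp {a..b} (gs k) \<subseteq> {a..b} - {c}) \<and>
     (\<forall>x\<in>{a..b} - {c}. \<exists>e>0. finite {k. k \<ge> k0 \<and> jsupp {a..b} (gs k) \<inter> ball x e \<noteq> {}}) \<and>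
     (\<forall>r. grows_at_most_exp k0 (\<lambda>k. cr_norm {a..b} r (gs k)))"

definition Jset :: "real \<Rightarrow> real \<Rightarrow> real \<Rightarrow> int \<Rightarrow> (int \<Rightarrow> real \<Rightarrow> real) \<Rightarrow> real \<Rightarrow> int set" where
  "Jset a b c k0 gs \<epsilon> = {k. k \<ge> k0 \<and>
      jsupp {a..b} (gs k) \<inter> {x\<in>{a..b}. \<epsilon> \<le> \<bar>x - c\<bar> \<and> \<bar>x - c\<bar> \<le> 2 * \<epsilon>} \<noteq> {}}"

lemma pliable_series_iff:
  "pliable_series a b c k0 cs gs \<longleftrightarrow> ser_ii a b c k0 cs gs \<and>
     (\<exists>L::real. L > 0 \<and>
        (\<forall>\<epsilon>::real. 0 < 2 * \<epsilon> \<and> 2 * \<epsilon> < b - a \<longrightarrow>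
           finite (Jset a b c k0 gs \<epsilon>) \<and> real (card (Jset a b c k0 gs \<epsilon>)) \<le> L \<and>
               (\<forall>k\<in>Jset a b c k0 gs \<epsilon>. 2 powr (- (real_of_int k * L)) \<le> \<epsilon>)))"
  unfolding pliable_series_def ser_ii_def Jset_def Let_def by blast

lemma bij_shift: "bij_betw (\<lambda>n::nat. k0 + int n) UNIV {k0..}"
  unfolding bij_betw_def inj_on_def
  by (auto simp: image_def intro!: exI[of _ "nat (_ - k0)"])

lemma has_sum_shift_nat:
  fixes F :: "int \<Rightarrow> 'a::{comm_monoid_add,topological_space}"
  shows "(F has_sum s) {k0..} \<longleftrightarrow> ((\<lambda>n. F (k0 + int n)) has_sum s) UNIV"
  using has_sum_reindex_bij_betw[OF bij_shift, where f=F and S=s] by simp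

lemma powr_shift_eq: "(2::real) powr (- real_of_int (k0 + int n)) = 2 powr (- real_of_int k0) * (1/2) ^ n"
proof -
  have "(2::real) powr (- real_of_int (k0 + int n)) = 2 powr (- real_of_int k0) * 2 powr (- real n)"
    by (simp add: powr_add[symmetric])
  also have "(2::real) powr (- real n) = (1/2) ^ n"
    by (simp add: powr_minus powr_realpow power_one_over inverse_eq_divide)
  finally show ?thesis .
qed

lemma summable_norms:
  assumes ser: "ser_ii a b c k0 cs gs" and ab: "a < b"
  shows "summable (\<lambda>n. cs (k0 + int n) * cr_norm {a..b} r (gs (k0 + int n)))"
proof -
  from ser obtain \<gamma> B where gB: "\<forall>k\<ge>k0. \<bar>2 powr (real_of_int k * \<gamma>) * cr_norm {a..b} r (gs k)\<bar> \<le> B"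
    unfolding ser_ii_def grows_at_most_exp_def by blast
  from ser have "((\<lambda>k. 2 powr (real_of_int k * (1 - \<gamma>)) * (cs k - 0)) \<longlongrightarrow> 0) at_top"
    unfolding ser_ii_def superexp_conv_def by blast
  then have "eventually (\<lambda>k. 2 powr (real_of_int k * (1 - \<gamma>)) * (cs k - 0) < 1) at_top"
    by (rule order_tendstoD) simp
  then obtain K where K: "\<And>k. k \<ge> K \<Longrightarrow> 2 powr (real_of_int k * (1 - \<gamma>)) * cs k < 1"
    unfolding eventually_at_top_linorder by auto
  show ?thesis
  proof (rule summable_comparison_test')
    show "summable (\<lambda>n. B * (2 powr (- real_of_int k0) * (1/2) ^ n))"
      by (intro summable_mult summable_geometric) simp
  next
    fix n :: nat assume n: "n \<ge> nat (K - k0)"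
    define k where "k = k0 + int n"
    have kk: "k \<ge> K" "k \<ge> k0" using n by (auto simp: k_def)
    have cpos: "cs k > 0" using ser kk unfolding ser_ii_def by auto
    have sm: "smooth_on_J {a..b} (gs k)" using ser kk unfolding ser_ii_def by auto
    have N0: "0 \<le> cr_norm {a..b} r (gs k)" using cr_norm_nonneg[OF sm] ab by simp
    have gb: "2 powr (real_of_int k * \<gamma>) * cr_norm {a..b} r (gs k) \<le> B" using gB kk N0 by auto
    have cb: "2 powr (real_of_int k * (1 - \<gamma>)) * cs k \<le> 1" using K kk by (simp add: less_imp_le)
    have "cs k * cr_norm {a..b} r (gs k) =
        (2 powr (real_of_int k * (1 - \<gamma>)) * cs k) * (2 powr (real_of_int k * \<gamma>) * cr_norm {a..b} r (gs k))
        * 2 powr (- real_of_int k)"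
    proof -
      have "2 powr (real_of_int k * (1 - \<gamma>)) * 2 powr (real_of_int k * \<gamma>) * 2 powr (- real_of_int k) = (1::real)"
        by (simp add: powr_add[symmetric] algebra_simps)
      then show ?thesis by (metis (no_types, lifting) mult.commute mult.left_commute mult_1)
    qed
    also have "\<dots> \<le> 1 * B * 2 powr (- real_of_int k)"
      by (intro mult_right_mono mult_mono cb gb) (use cpos N0 in auto)
    finally have "cs k * cr_norm {a..b} r (gs k) \<le> B * 2 powr (- real_of_int k)" by simp
    then show "norm (cs (k0 + int n) * cr_norm {a..b} r (gs (k0 + int n))) \<le> B * (2 powr (- real_of_int k0) * (1/2) ^ n)"
      using cpos N0 powr_shift_eq[of k0 n] by (simp add: k_def)
  qed
qed

lemma ser_ii_D:
  assumes "ser_ii a b c k0 cs gs" "k \<ge> k0"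
  shows "cs k > 0" "smooth_on_J {a..b} (gs k)" "jsupp {a..b} (gs k) \<subseteq> {a..b} - {c}"
  using assms unfolding ser_ii_def by auto

lemma deriv_series:
  assumes ab: "a < b" and ser: "ser_ii a b c k0 cs gs" and fs: "smooth_on_J {a..b} f"
    and fsum: "\<forall>x\<in>{a..b}. ((\<lambda>k. cs k * gs k x) has_sum f x) {k0..}"
  shows "\<forall>x\<in>{a..b}. (\<lambda>n. cs (k0 + int n) * jderivs {a..b} i (gs (k0 + int n)) x) sums jderivs {a..b} i f x"
proof (induction i)
  case 0
  show ?case
  proof
    fix x assume x: "x \<in> {a..b}"
    then have "((\<lambda>k. cs k * gs k x) has_sum f x) {k0..}" using fsum by blast
    then have "((\<lambda>n. cs (k0 + int n) * gs (k0 + int n) x) has_sum f x) UNIV"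
      by (simp only: has_sum_shift_nat)
    then show "(\<lambda>n. cs (k0 + int n) * jderivs {a..b} 0 (gs (k0 + int n)) x) sums jderivs {a..b} 0 f x"
      by (simp add: has_sum_imp_sums)
  qed
next
  case (Suc i)
  define C where "C n = cs (k0 + int n)" for n
  define G where "G n = gs (k0 + int n)" for n
  define M where "M n = C n * cr_norm {a..b} (Suc i) (G n)" for n
  have Cp: "C n > 0" for n using ser_ii_D(1)[OF ser] by (simp add: C_def)
  have Gs: "smooth_on_J {a..b} (G n)" for n using ser_ii_D(2)[OF ser] by (simp add: G_def)
  have Msum: "summable M" unfolding M_def C_def G_def by (rule summable_norms[OF ser ab])
  have bnd: "norm (C n * jderivs {a..b} (Suc i) (G n) x) \<le> M n" if "x \<in> {a..b}" for n x
    unfolding M_def norm_mult using Cp[of n] cr_norm_ge[OF Gs[of n] order_refl that]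
    by (simp add: abs_of_pos mult_left_mono)
  define g' where "g' x = suminf (\<lambda>n. C n * jderivs {a..b} (Suc i) (G n) x)" for x
  have "\<exists>g. \<forall>x\<in>{a..b}. (\<lambda>n. C n * jderivs {a..b} i (G n) x) sums g x \<and>
          (g has_field_derivative g' x) (at x within {a..b})"
  proof (rule has_field_derivative_series[of "{a..b}" "\<lambda>n x. C n * jderivs {a..b} i (G n) x"
      "\<lambda>n x. C n * jderivs {a..b} (Suc i) (G n) x" g' a])
    show "convex {a..b}" by simp
    show "((\<lambda>x. C n * jderivs {a..b} i (G n) x) has_field_derivative C n * jderivs {a..b} (Suc i) (G n) x)
          (at x within {a..b})" if "x \<in> {a..b}" for n x
      by (intro DERIV_cmult smooth_D[OF Gs that])
    show "uniform_limit {a..b} (\<lambda>n x. \<Sum>j<n. C j * jderivs {a..b} (Suc i) (G j) x) g' sequentially"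
      unfolding g'_def by (rule Weierstrass_m_test[OF bnd Msum])
    show "a \<in> {a..b}" using ab by simp
    show "summable (\<lambda>n. C n * jderivs {a..b} i (G n) a)"
      using Suc.IH ab by (auto simp: C_def G_def sums_iff)
  qed
  then obtain g where g: "\<And>x. x \<in> {a..b} \<Longrightarrow> (\<lambda>n. C n * jderivs {a..b} i (G n) x) sums g x"
      "\<And>x. x \<in> {a..b} \<Longrightarrow> (g has_field_derivative g' x) (at x within {a..b})" by blast
  have geq: "g x = jderivs {a..b} i f x" if "x \<in> {a..b}" for x
    using g(1)[OF that] Suc.IH that sums_unique2 by (fastforce simp: C_def G_def)
  show ?case
  proof
    fix x assume x: "x \<in> {a..b}"
    have "(jderivs {a..b} i f has_field_derivative g' x) (at x within {a..b})"
      by (rule has_field_derivative_transform_within[OF g(2)[OF x] zero_less_one x]) (use geq in auto)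
    then have e: "jderivs {a..b} (Suc i) f x = g' x"
      unfolding jderivs_Suc by (rule jderiv_eqI[OF ab x])
    have "summable (\<lambda>n. C n * jderivs {a..b} (Suc i) (G n) x)"
      by (rule summable_comparison_test[OF _ Msum]) (use bnd x in auto)
    then show "(\<lambda>n. cs (k0 + int n) * jderivs {a..b} (Suc i) (gs (k0 + int n)) x) sums jderivs {a..b} (Suc i) f x"
      unfolding e g'_def C_def G_def by (simp add: summable_sums)
  qed
qed

lemma deriv_has_sum:
  assumes ab: "a < b" and ser: "ser_ii a b c k0 cs gs" and fs: "smooth_on_J {a..b} f"
    and fsum: "\<forall>x\<in>{a..b}. ((\<lambda>k. cs k * gs k x) has_sum f x) {k0..}"
    and x: "x \<in> {a..b}"
  shows "((\<lambda>k. cs k * jderivs {a..b} i (gs k) x) has_sum jderivs {a..b} i f x) {k0..}"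
proof -
  define C where "C n = cs (k0 + int n)" for n
  define G where "G n = gs (k0 + int n)" for n
  have Cp: "C n > 0" for n using ser_ii_D(1)[OF ser] by (simp add: C_def)
  have Gs: "smooth_on_J {a..b} (G n)" for n using ser_ii_D(2)[OF ser] by (simp add: G_def)
  have Msum: "summable (\<lambda>n. C n * cr_norm {a..b} i (G n))"
    unfolding C_def G_def by (rule summable_norms[OF ser ab])
  have "summable (\<lambda>n. norm (C n * jderivs {a..b} i (G n) x))"
  proof (rule summable_comparison_test[OF _ Msum])
    have "norm (norm (C n * jderivs {a..b} i (G n) x)) \<le> C n * cr_norm {a..b} i (G n)" for n
      using Cp[of n] cr_norm_ge[OF Gs[of n] order_refl x] by (simp add: abs_mult abs_of_pos mult_left_mono)
    then show "\<exists>N. \<forall>n\<ge>N. norm (norm (C n * jderivs {a..b} i (G n) x)) \<le> C n * cr_norm {a..b} i (G n)"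
      by blast
  qed
  moreover have "(\<lambda>n. C n * jderivs {a..b} i (G n) x) sums jderivs {a..b} i f x"
    using deriv_series[OF ab ser fs fsum] x by (simp add: C_def G_def)
  ultimately have "((\<lambda>n. C n * jderivs {a..b} i (G n) x) has_sum jderivs {a..b} i f x) UNIV"
    by (rule norm_summable_imp_has_sum)
  then show ?thesis
    using has_sum_shift_nat[where F="\<lambda>k. cs k * jderivs {a..b} i (gs k) x"] by (simp add: C_def G_def)
qed

lemma filterlim_nat_shift: "filterlim (\<lambda>l::int. nat (l - k0 + 1)) sequentially at_top"
  unfolding filterlim_at_top eventually_at_top_linorder
proof (intro allI)
  fix Z :: nat show "\<exists>N. \<forall>n\<ge>N. Z \<le> nat (n - k0 + 1)" by (rule exI[of _ "k0 + int Z"]) auto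
qed

lemma part_a:
  assumes ab: "a < b" and ser: "ser_ii a b c k0 cs gs" and fs: "smooth_on_J {a..b} f"
    and fsum: "\<forall>x\<in>{a..b}. ((\<lambda>k. cs k * gs k x) has_sum f x) {k0..}"
  shows "((\<lambda>l. cr_norm {a..b} r (\<lambda>x. f x - (\<Sum>k\<in>{k0..l}. cs k * gs k x))) \<longlongrightarrow> 0) at_top"
proof -
  define C where "C n = cs (k0 + int n)" for n
  define G where "G n = gs (k0 + int n)" for n
  define M where "M n = C n * cr_norm {a..b} r (G n)" for n
  define T where "T N = suminf (\<lambda>n. M (n + N))" for N
  have Cp: "C n > 0" for n using ser_ii_D(1)[OF ser] by (simp add: C_def)
  have Gs: "smooth_on_J {a..b} (G n)" for n using ser_ii_D(2)[OF ser] by (simp add: G_def)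
  have Msum: "summable M" unfolding M_def C_def G_def by (rule summable_norms[OF ser ab])
  have "T \<longlonglongrightarrow> suminf M - suminf M"
    unfolding T_def suminf_minus_initial_segment[OF Msum]
    by (intro tendsto_diff tendsto_const summable_LIMSEQ Msum)
  then have T0: "T \<longlonglongrightarrow> 0" by simp
  have main: "cr_norm {a..b} r (\<lambda>x. f x - (\<Sum>k\<in>{k0..l}. cs k * gs k x)) \<le> (real r + 1) * T (nat (l - k0 + 1))
      \<and> 0 \<le> cr_norm {a..b} r (\<lambda>x. f x - (\<Sum>k\<in>{k0..l}. cs k * gs k x))"
    if l: "l \<ge> k0" for l
  proof -
    define N where "N = nat (l - k0 + 1)"
    have img: "{k0..l} = (\<lambda>n. k0 + int n) ` {..<N}"
      unfolding N_def image_def using l by (auto intro!: bexI[of _ "nat (_ - k0)"])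
    have sumeq: "(\<Sum>k\<in>{k0..l}. cs k * gs k x) = (\<Sum>n<N. C n * G n x)" for x
      unfolding img by (subst sum.reindex) (auto simp: inj_on_def C_def G_def)
    define S where "S x = (\<Sum>n<N. C n * G n x)" for x
    have SS: "smooth_on_J {a..b} S \<and> (\<forall>n. \<forall>x\<in>{a..b}. jderivs {a..b} n S x = (\<Sum>k<N. C k * jderivs {a..b} n (G k) x))"
      unfolding S_def by (rule smooth_sum[OF ab]) (use Gs in auto)
    have DS: "smooth_on_J {a..b} (\<lambda>x. f x - S x) \<and>
      (\<forall>n. \<forall>x\<in>{a..b}. jderivs {a..b} n (\<lambda>x. f x - S x) x = jderivs {a..b} n f x - jderivs {a..b} n S x)"
      by (rule smooth_diff[OF ab fs SS[THEN conjunct1]])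
    have fe: "(\<lambda>x. f x - (\<Sum>k\<in>{k0..l}. cs k * gs k x)) = (\<lambda>x. f x - S x)"
      by (simp add: sumeq S_def)
    have bound: "\<bar>jderivs {a..b} i (\<lambda>x. f x - S x) x\<bar> \<le> T N" if i: "i \<le> r" and x: "x \<in> {a..b}" for i x
    proof -
      define h where "h n = C n * jderivs {a..b} i (G n) x" for n
      have hb: "norm (h n) \<le> M n" for n
        unfolding h_def M_def norm_mult using Cp[of n]
          order.trans[OF cr_norm_ge[OF Gs[of n] order_refl x] cr_norm_mono[OF Gs[of n] less_imp_le[OF ab] i]]
        by (simp add: abs_of_pos mult_left_mono)
      have hs: "summable h" by (rule summable_comparison_test[OF _ Msum]) (use hb in auto)
      have "h sums jderivs {a..b} i f x"
        unfolding h_def[abs_def] using deriv_series[OF ab ser fs fsum] x by (simp add: C_def G_def)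
      then have "jderivs {a..b} i (\<lambda>x. f x - S x) x = suminf (\<lambda>n. h (n + N))"
        using DS SS x suminf_minus_initial_segment[OF hs, of N] by (simp add: h_def[abs_def] sums_iff)
      also have "\<bar>\<dots>\<bar> \<le> suminf (\<lambda>n. norm (h (n + N)))"
      proof -
        have ns: "summable (\<lambda>n. norm (h n))" by (rule summable_comparison_test[OF _ Msum]) (use hb in auto)
        then have ns': "summable (\<lambda>n. norm (h (n + N)))" using summable_iff_shift[of "\<lambda>n. norm (h n)" N] by simp
        show ?thesis using summable_norm[OF ns'] by simp
      qed
      also have "\<dots> \<le> T N"
        unfolding T_def
      proof (rule suminf_le)
        have ns: "summable (\<lambda>n. norm (h n))" by (rule summable_comparison_test[OF _ Msum]) (use hb in auto)
        then show "summable (\<lambda>n. norm (h (n + N)))" using summable_iff_shift[of "\<lambda>n. norm (h n)" N] by simp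
        show "summable (\<lambda>n. M (n + N))" using Msum summable_iff_shift[of M N] by simp
        show "\<And>n. norm (h (n + N)) \<le> M (n + N)" by (rule hb)
      qed
      finally show ?thesis .
    qed
    have "cr_norm {a..b} r (\<lambda>x. f x - S x) \<le> (real r + 1) * T N"
      by (rule cr_norm_le) (use ab bound in auto)
    moreover have "0 \<le> cr_norm {a..b} r (\<lambda>x. f x - S x)"
      by (rule cr_norm_nonneg) (use DS ab in auto)
    ultimately show ?thesis unfolding fe N_def by simp
  qed
  show ?thesis
  proof (rule tendsto_sandwich[where f="\<lambda>_. 0" and h="\<lambda>l. (real r + 1) * T (nat (l - k0 + 1))"])
    show "eventually (\<lambda>l. 0 \<le> cr_norm {a..b} r (\<lambda>x. f x - (\<Sum>k\<in>{k0..l}. cs k * gs k x))) at_top"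
      unfolding eventually_at_top_linorder using main by blast
    show "eventually (\<lambda>l. cr_norm {a..b} r (\<lambda>x. f x - (\<Sum>k\<in>{k0..l}. cs k * gs k x)) \<le> (real r + 1) * T (nat (l - k0 + 1))) at_top"
      unfolding eventually_at_top_linorder using main by blast
    show "((\<lambda>_. 0) \<longlongrightarrow> (0::real)) at_top" by simp
    have "((\<lambda>l. T (nat (l - k0 + 1))) \<longlongrightarrow> 0) at_top"
      by (rule filterlim_compose[OF T0 filterlim_nat_shift])
    then show "((\<lambda>l. (real r + 1) * T (nat (l - k0 + 1))) \<longlongrightarrow> 0) at_top"
      by (intro tendsto_mult_right_zero)
  qed
qed

lemma grows_mono:
  assumes "grows_at_most_exp k0 A" "\<And>k. k \<ge> k0 \<Longrightarrow> 0 \<le> A' k \<and> A' k \<le> A k"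
  shows "grows_at_most_exp k0 A'"
proof -
  from assms(1) obtain \<gamma> B where gB: "\<forall>k\<ge>k0. \<bar>2 powr (real_of_int k * \<gamma>) * A k\<bar> \<le> B"
    unfolding grows_at_most_exp_def by blast
  have "\<bar>2 powr (real_of_int k * \<gamma>) * A' k\<bar> \<le> B" if "k \<ge> k0" for k
  proof -
    have "\<bar>2 powr (real_of_int k * \<gamma>) * A' k\<bar> = 2 powr (real_of_int k * \<gamma>) * A' k"
      using assms(2)[OF that] by simp
    also have "\<dots> \<le> 2 powr (real_of_int k * \<gamma>) * A k"
      using assms(2)[OF that] by (intro mult_left_mono) auto
    also have "\<dots> \<le> B" using gB that by auto
    finally show ?thesis .
  qed
  then show ?thesis unfolding grows_at_most_exp_def by blast
qed

lemma part_b: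
  assumes ab: "a < b" and cc: "c = a \<or> c = b" and ser: "pliable_series a b c k0 cs gs" and fs: "smooth_on_J {a..b} f"
    and fsum: "\<forall>x\<in>{a..b}. ((\<lambda>k. cs k * gs k x) has_sum f x) {k0..}"
  shows "jderivs {a..b} r f c = 0 \<and>
          pliable_series a b c k0 cs (\<lambda>k. jderivs {a..b} r (gs k)) \<and>
          (\<forall>x\<in>{a..b}. ((\<lambda>k. cs k * jderivs {a..b} r (gs k) x) has_sum jderivs {a..b} r f x) {k0..})"
proof -
  have s2: "ser_ii a b c k0 cs gs" using ser pliable_series_iff by blast
  from ser obtain L where L: "L > 0" "\<forall>\<epsilon>::real. 0 < 2 * \<epsilon> \<and> 2 * \<epsilon> < b - a \<longrightarrow>
           finite (Jset a b c k0 gs \<epsilon>) \<and> real (card (Jset a b c k0 gs \<epsilon>)) \<le> L \<and>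
               (\<forall>k\<in>Jset a b c k0 gs \<epsilon>. 2 powr (- (real_of_int k * L)) \<le> \<epsilon>)"
    unfolding pliable_series_iff by blast
  have hs: "\<forall>x\<in>{a..b}. ((\<lambda>k. cs k * jderivs {a..b} r (gs k) x) has_sum jderivs {a..b} r f x) {k0..}"
    using deriv_has_sum[OF ab s2 fs fsum] by blast
  have sub: "jsupp {a..b} (jderivs {a..b} r (gs k)) \<subseteq> jsupp {a..b} (gs k)" for k
    by (rule jsupp_jderivs[OF ab])
  have cJ: "c \<in> {a..b}" using assms by auto
  have zero: "cs k * jderivs {a..b} r (gs k) c = 0" if "k \<in> {k0..}" for k
  proof -
    have "c \<notin> jsupp {a..b} (gs k)" using ser_ii_D(3)[OF s2, of k] that by auto
    then have "c \<notin> jsupp {a..b} (jderivs {a..b} r (gs k))" using sub by blast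
    then show ?thesis using not_jsupp_zero[OF cJ] by simp
  qed
  have "((\<lambda>k. cs k * jderivs {a..b} r (gs k) c) has_sum 0) {k0..}"
    by (rule has_sum_0) (use zero in auto)
  then have fc: "jderivs {a..b} r f c = 0" using hs cJ has_sum_unique by blast
  have s2': "ser_ii a b c k0 cs (\<lambda>k. jderivs {a..b} r (gs k))"
    unfolding ser_ii_def
  proof (intro conjI allI impI ballI)
    show "k0 \<le> k \<Longrightarrow> 0 < cs k" for k using ser_ii_D(1)[OF s2] by blast
    show "superexp_conv cs 0" using s2 unfolding ser_ii_def by blast
    show "k0 \<le> k \<Longrightarrow> smooth_on_J {a..b} (jderivs {a..b} r (gs k))" for k
      using ser_ii_D(2)[OF s2] smooth_jderivs by blast
    show "compact (jsupp {a..b} (jderivs {a..b} r (gs k)))" for k by (rule compact_jsupp)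
    show "k0 \<le> k \<Longrightarrow> jsupp {a..b} (jderivs {a..b} r (gs k)) \<subseteq> {a..b} - {c}" for k
      using ser_ii_D(3)[OF s2] sub by blast
    fix x assume x: "x \<in> {a..b} - {c}"
    then obtain e where e: "e > 0" "finite {k. k \<ge> k0 \<and> jsupp {a..b} (gs k) \<inter> ball x e \<noteq> {}}"
      using s2 unfolding ser_ii_def by blast
    show "\<exists>e>0. finite {k. k \<ge> k0 \<and> jsupp {a..b} (jderivs {a..b} r (gs k)) \<inter> ball x e \<noteq> {}}"
      by (rule exI[of _ e], rule conjI[OF e(1)], rule finite_subset[OF _ e(2)]) (use sub in blast)
  next
    fix s
    show "grows_at_most_exp k0 (\<lambda>k. cr_norm {a..b} s (jderivs {a..b} r (gs k)))"
    proof (rule grows_mono)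
      show "grows_at_most_exp k0 (\<lambda>k. cr_norm {a..b} (s + r) (gs k))"
        using s2 unfolding ser_ii_def by blast
      fix k assume "k \<ge> k0"
      then have sm: "smooth_on_J {a..b} (gs k)" using ser_ii_D(2)[OF s2] by blast
      show "0 \<le> cr_norm {a..b} s (jderivs {a..b} r (gs k)) \<and>
          cr_norm {a..b} s (jderivs {a..b} r (gs k)) \<le> cr_norm {a..b} (s + r) (gs k)"
        using cr_norm_nonneg[OF smooth_jderivs[OF sm]] cr_norm_jderivs[OF sm] ab by auto
    qed
  qed
  have Jsub: "Jset a b c k0 (\<lambda>k. jderivs {a..b} r (gs k)) \<epsilon> \<subseteq> Jset a b c k0 gs \<epsilon>" for \<epsilon>
    unfolding Jset_def using sub by blast
  have "pliable_series a b c k0 cs (\<lambda>k. jderivs {a..b} r (gs k))"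
    unfolding pliable_series_iff
  proof (intro conjI s2' exI[of _ L] L(1) allI impI ballI)
    fix \<epsilon> :: real assume e: "0 < 2 * \<epsilon> \<and> 2 * \<epsilon> < b - a"
    have Le: "finite (Jset a b c k0 gs \<epsilon>)" "real (card (Jset a b c k0 gs \<epsilon>)) \<le> L"
       "\<And>k. k\<in>Jset a b c k0 gs \<epsilon> \<Longrightarrow> 2 powr (- (real_of_int k * L)) \<le> \<epsilon>"
      using L(2)[rule_format, OF e] by auto
    show "finite (Jset a b c k0 (\<lambda>k. jderivs {a..b} r (gs k)) \<epsilon>)"
      by (rule finite_subset[OF Jsub Le(1)])
    have "card (Jset a b c k0 (\<lambda>k. jderivs {a..b} r (gs k)) \<epsilon>) \<le> card (Jset a b c k0 gs \<epsilon>)"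
      by (rule card_mono[OF Le(1) Jsub])
    then show "real (card (Jset a b c k0 (\<lambda>k. jderivs {a..b} r (gs k)) \<epsilon>)) \<le> L"
      using Le(2) by linarith
    show "k \<in> Jset a b c k0 (\<lambda>k. jderivs {a..b} r (gs k)) \<epsilon> \<Longrightarrow> 2 powr - (real_of_int k * L) \<le> \<epsilon>" for k
      using Le(3) Jsub[of \<epsilon>] by blast
  qed
  then show ?thesis using fc hs by blast
qed

definition wk3 :: "real \<Rightarrow> real \<Rightarrow> real \<Rightarrow> int \<Rightarrow> (int \<Rightarrow> real \<Rightarrow> real) \<Rightarrow> bool" where
  "wk3 a b c k0 gs \<longleftrightarrow> (\<exists>L1 L2 C e0. L2 > 0 \<and> C > 0 \<and> e0 > 0 \<and>
     (\<forall>\<epsilon>. 0 < \<epsilon> \<and> \<epsilon> < e0 \<and> 2 * \<epsilon> < b - a \<longrightarrow>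
        finite (Jset a b c k0 gs \<epsilon>) \<and> real (card (Jset a b c k0 gs \<epsilon>)) \<le> L1 \<and>
        (\<forall>k\<in>Jset a b c k0 gs \<epsilon>. 2 powr (- (real_of_int k * L2)) \<le> C * \<epsilon>)))"

lemma finite_far:
  assumes s2: "ser_ii a b c k0 cs gs" and eta: "\<eta> > 0"
  shows "finite {k. k \<ge> k0 \<and> jsupp {a..b} (gs k) \<inter> {x\<in>{a..b}. \<eta> \<le> \<bar>x - c\<bar>} \<noteq> {}}"
proof -
  define A where "A = {x\<in>{a..b}. \<eta> \<le> \<bar>x - c\<bar>}"
  have "{x::real. \<eta> \<le> \<bar>x - c\<bar>} = - ball c \<eta>" by (auto simp: dist_real_def)
  then have "closed {x::real. \<eta> \<le> \<bar>x - c\<bar>}" using closed_Compl[OF open_ball] by metis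
  moreover have "A = {a..b} \<inter> {x::real. \<eta> \<le> \<bar>x - c\<bar>}" unfolding A_def by auto
  ultimately have cA: "compact A" using compact_Int_closed[OF compact_Icc] by metis
  have lf: "\<forall>x\<in>{a..b} - {c}. \<exists>e>0. finite {k. k \<ge> k0 \<and> jsupp {a..b} (gs k) \<inter> ball x e \<noteq> {}}"
    using s2 unfolding ser_ii_def by blast
  have "\<forall>x\<in>A. \<exists>e>0. finite {k. k \<ge> k0 \<and> jsupp {a..b} (gs k) \<inter> ball x e \<noteq> {}}"
  proof
    fix x assume "x \<in> A" then have "x \<in> {a..b} - {c}" using eta unfolding A_def by auto
    then show "\<exists>e>0. finite {k. k \<ge> k0 \<and> jsupp {a..b} (gs k) \<inter> ball x e \<noteq> {}}" using lf by blast
  qed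
  then obtain e where e: "\<And>x. x \<in> A \<Longrightarrow> e x > 0 \<and> finite {k. k \<ge> k0 \<and> jsupp {a..b} (gs k) \<inter> ball x (e x) \<noteq> {}}"
    by metis
  have "A \<subseteq> (\<Union>x\<in>A. ball x (e x))" using e by force
  then obtain A' where A': "A' \<subseteq> A" "finite A'" "A \<subseteq> (\<Union>x\<in>A'. ball x (e x))"
    using compactE_image[OF cA, of A "\<lambda>x. ball x (e x)"] by blast
  have "{k. k \<ge> k0 \<and> jsupp {a..b} (gs k) \<inter> A \<noteq> {}} \<subseteq>
      (\<Union>x\<in>A'. {k. k \<ge> k0 \<and> jsupp {a..b} (gs k) \<inter> ball x (e x) \<noteq> {}})"
    using A'(3) by blast
  moreover have "finite (\<Union>x\<in>A'. {k. k \<ge> k0 \<and> jsupp {a..b} (gs k) \<inter> ball x (e x) \<noteq> {}})"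
    using A'(1,2) e by blast
  ultimately show ?thesis unfolding A_def by (rule finite_subset)
qed

lemma filterlim_int_shift: "filterlim (\<lambda>k::int. k - m) at_top at_top"
  unfolding filterlim_at_top eventually_at_top_linorder
proof (intro allI)
  fix Z :: int show "\<exists>N. \<forall>n\<ge>N. Z \<le> n - m" by (rule exI[of _ "Z + m"]) auto
qed

lemma wk3_uniform:
  assumes ab: "a < b" and s2: "ser_ii a b c k0 cs gs" and w: "wk3 a b c k0 gs"
  shows "\<exists>L1 L2 C. L2 > 0 \<and> C > 0 \<and>
     (\<forall>\<epsilon>. 0 < \<epsilon> \<and> 2 * \<epsilon> < b - a \<longrightarrow>
        finite (Jset a b c k0 gs \<epsilon>) \<and> real (card (Jset a b c k0 gs \<epsilon>)) \<le> L1 \<and>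
        (\<forall>k\<in>Jset a b c k0 gs \<epsilon>. 2 powr (- (real_of_int k * L2)) \<le> C * \<epsilon>))"
proof -
  from w obtain L1 L2 C e0 where W: "L2 > 0" "C > 0" "e0 > 0"
    "\<And>\<epsilon>. 0 < \<epsilon> \<Longrightarrow> \<epsilon> < e0 \<Longrightarrow> 2 * \<epsilon> < b - a \<Longrightarrow>
        finite (Jset a b c k0 gs \<epsilon>) \<and> real (card (Jset a b c k0 gs \<epsilon>)) \<le> L1 \<and>
        (\<forall>k\<in>Jset a b c k0 gs \<epsilon>. 2 powr (- (real_of_int k * L2)) \<le> C * \<epsilon>)"
    unfolding wk3_def by blast
  define F where "F = {k. k \<ge> k0 \<and> jsupp {a..b} (gs k) \<inter> {x\<in>{a..b}. e0 \<le> \<bar>x - c\<bar>} \<noteq> {}}"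
  have fF: "finite F" unfolding F_def by (rule finite_far[OF s2 W(3)])
  define M where "M = (\<Sum>k\<in>F. 2 powr (- (real_of_int k * L2)))"
  have M0: "M \<ge> 0" unfolding M_def by (intro sum_nonneg) auto
  have MF: "2 powr (- (real_of_int k * L2)) \<le> M" if "k \<in> F" for k
    unfolding M_def using member_le_sum[OF that _ fF, of "\<lambda>k. 2 powr (- (real_of_int k * L2))"] by simp
  define C' where "C' = C + M / e0"
  have C'p: "C' > 0" unfolding C'_def using W M0 by (simp add: add_pos_nonneg)
  have main: "\<forall>\<epsilon>. 0 < \<epsilon> \<and> 2 * \<epsilon> < b - a \<longrightarrow>
        finite (Jset a b c k0 gs \<epsilon>) \<and> real (card (Jset a b c k0 gs \<epsilon>)) \<le> max L1 (real (card F)) \<and>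
        (\<forall>k\<in>Jset a b c k0 gs \<epsilon>. 2 powr (- (real_of_int k * L2)) \<le> C' * \<epsilon>)"
  proof (intro allI impI)
    fix \<epsilon> :: real assume e: "0 < \<epsilon> \<and> 2 * \<epsilon> < b - a"
    show "finite (Jset a b c k0 gs \<epsilon>) \<and> real (card (Jset a b c k0 gs \<epsilon>)) \<le> max L1 (real (card F)) \<and>
        (\<forall>k\<in>Jset a b c k0 gs \<epsilon>. 2 powr (- (real_of_int k * L2)) \<le> C' * \<epsilon>)"
    proof (cases "\<epsilon> < e0")
      case True
      have "C * \<epsilon> \<le> C' * \<epsilon>" unfolding C'_def using e M0 W(3) by (simp add: mult_right_mono)
      have H: "finite (Jset a b c k0 gs \<epsilon>)" "real (card (Jset a b c k0 gs \<epsilon>)) \<le> L1"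
        "\<And>k. k\<in>Jset a b c k0 gs \<epsilon> \<Longrightarrow> 2 powr (- (real_of_int k * L2)) \<le> C * \<epsilon>"
        using W(4)[of \<epsilon>] True e by auto
      show ?thesis
      proof (intro conjI ballI H(1))
        show "real (card (Jset a b c k0 gs \<epsilon>)) \<le> max L1 (real (card F))" using H(2) by linarith
        fix k assume "k \<in> Jset a b c k0 gs \<epsilon>"
        then show "2 powr (- (real_of_int k * L2)) \<le> C' * \<epsilon>" using H(3) \<open>C * \<epsilon> \<le> C' * \<epsilon>\<close> by force
      qed
    next
      case False
      have sub: "Jset a b c k0 gs \<epsilon> \<subseteq> F" unfolding Jset_def F_def using False by force
      have "1 \<le> \<epsilon> / e0" using False W(3) by simp
      then have "M * 1 \<le> M * (\<epsilon> / e0)" using M0 by (rule mult_left_mono)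
      then have "M \<le> (M / e0) * \<epsilon>" by simp
      also have "\<dots> \<le> C' * \<epsilon>" unfolding C'_def using e W(2) by (simp add: distrib_right)
      finally have "M \<le> C' * \<epsilon>" .
      then show ?thesis using sub finite_subset[OF sub fF] card_mono[OF fF sub] MF by force
    qed
  qed
  show ?thesis using W(1) C'p main by blast
qed

lemma bij_minus: "bij_betw (\<lambda>k::int. k - int m) {k0 + int m..} {k0..}"
  unfolding bij_betw_def
proof
  show "inj_on (\<lambda>k::int. k - int m) {k0 + int m..}" by (simp add: inj_on_def)
  show "(\<lambda>k. k - int m) ` {k0 + int m..} = {k0..}"
  proof (intro set_eqI iffI)
    fix k assume "k \<in> {k0..}"
    then show "k \<in> (\<lambda>k. k - int m) ` {k0 + int m..}" by (intro image_eqI[of _ _ "k + int m"]) auto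
  qed auto
qed

lemma Jset_shift:
  "Jset a b c (k0 + int m) (\<lambda>k. gs (k - int m)) \<epsilon> = (\<lambda>k. k + int m) ` Jset a b c k0 gs \<epsilon>"
proof (intro set_eqI iffI)
  fix k assume "k \<in> Jset a b c (k0 + int m) (\<lambda>k. gs (k - int m)) \<epsilon>"
  then show "k \<in> (\<lambda>k. k + int m) ` Jset a b c k0 gs \<epsilon>"
    by (intro image_eqI[of _ _ "k - int m"]) (auto simp: Jset_def)
qed (auto simp: Jset_def)

lemma shift_pliable:
  assumes ab: "a < b" and cc: "c = a \<or> c = b" and fs: "smooth_on_J {a..b} f"
    and s2: "ser_ii a b c k0 cs gs" and w: "wk3 a b c k0 gs"
    and fsum: "\<forall>x\<in>{a..b}. ((\<lambda>k. cs k * gs k x) has_sum f x) {k0..}"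
  shows "pliable {a..b} c f"
proof -
  obtain L1 L2 C where U: "L2 > 0" "C > 0"
    "\<And>\<epsilon>. 0 < \<epsilon> \<Longrightarrow> 2 * \<epsilon> < b - a \<Longrightarrow>
        finite (Jset a b c k0 gs \<epsilon>) \<and> real (card (Jset a b c k0 gs \<epsilon>)) \<le> L1 \<and>
        (\<forall>k\<in>Jset a b c k0 gs \<epsilon>. 2 powr (- (real_of_int k * L2)) \<le> C * \<epsilon>)"
    using wk3_uniform[OF ab s2 w] by blast
  obtain m :: nat where m: "max (- real_of_int k0) (log 2 C / L2) \<le> real m"
    using real_arch_simple by blast
  have m1: "k0 + int m \<ge> 0" using m by linarith
  have "log 2 C \<le> real m * L2" using m U(1) by (simp add: pos_divide_le_eq)
  then have "2 powr (log 2 C) \<le> 2 powr (real m * L2)" by (rule powr_mono) simp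
  then have Cm: "C \<le> 2 powr (real m * L2)" using U(2) by simp
  define L where "L = max L1 L2"
  have Lp: "L > 0" "L2 \<le> L" "L1 \<le> L" using U(1) unfolding L_def by auto
  define k0' where "k0' = k0 + int m"
  define cs' where "cs' k = cs (k - int m)" for k
  define gs' where "gs' k = gs (k - int m)" for k
  have s2': "ser_ii a b c k0' cs' gs'"
    unfolding ser_ii_def
  proof (intro conjI allI impI ballI)
    show "k0' \<le> k \<Longrightarrow> 0 < cs' k" for k using ser_ii_D(1)[OF s2] by (simp add: k0'_def cs'_def)
    show "k0' \<le> k \<Longrightarrow> smooth_on_J {a..b} (gs' k)" for k using ser_ii_D(2)[OF s2] by (simp add: k0'_def gs'_def)
    show "compact (jsupp {a..b} (gs' k))" for k by (rule compact_jsupp)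
    show "k0' \<le> k \<Longrightarrow> jsupp {a..b} (gs' k) \<subseteq> {a..b} - {c}" for k
      using ser_ii_D(3)[OF s2] by (simp add: k0'_def gs'_def)
    show "superexp_conv cs' 0"
      unfolding superexp_conv_def
    proof
      fix \<gamma> :: real
      have "((\<lambda>k. 2 powr (real_of_int k * \<gamma>) * (cs k - 0)) \<longlongrightarrow> 0) at_top"
        using s2 unfolding ser_ii_def superexp_conv_def by blast
      then have "((\<lambda>k. 2 powr (real_of_int (k - int m) * \<gamma>) * (cs (k - int m) - 0)) \<longlongrightarrow> 0) at_top"
        by (rule filterlim_compose[OF _ filterlim_int_shift])
      then have "((\<lambda>k. 2 powr (real m * \<gamma>) * (2 powr (real_of_int (k - int m) * \<gamma>) * (cs (k - int m) - 0))) \<longlongrightarrow> 0) at_top"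
        by (rule tendsto_mult_right_zero)
      moreover have "2 powr (real m * \<gamma>) * (2 powr (real_of_int (k - int m) * \<gamma>) * (cs (k - int m) - 0))
          = 2 powr (real_of_int k * \<gamma>) * (cs' k - 0)" for k
        by (simp add: cs'_def powr_add[symmetric] algebra_simps)
      ultimately show "((\<lambda>k. 2 powr (real_of_int k * \<gamma>) * (cs' k - 0)) \<longlongrightarrow> 0) at_top" by simp
    qed
    fix x assume x: "x \<in> {a..b} - {c}"
    then obtain e where e: "e > 0" "finite {k. k \<ge> k0 \<and> jsupp {a..b} (gs k) \<inter> ball x e \<noteq> {}}"
      using s2 unfolding ser_ii_def by blast
    have "{k. k \<ge> k0' \<and> jsupp {a..b} (gs' k) \<inter> ball x e \<noteq> {}} \<subseteq>
        (\<lambda>k. k + int m) ` {k. k \<ge> k0 \<and> jsupp {a..b} (gs k) \<inter> ball x e \<noteq> {}}"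
    proof
      fix k assume "k \<in> {k. k \<ge> k0' \<and> jsupp {a..b} (gs' k) \<inter> ball x e \<noteq> {}}"
      then show "k \<in> (\<lambda>k. k + int m) ` {k. k \<ge> k0 \<and> jsupp {a..b} (gs k) \<inter> ball x e \<noteq> {}}"
        by (intro image_eqI[of _ _ "k - int m"]) (auto simp: k0'_def gs'_def)
    qed
    then show "\<exists>e>0. finite {k. k \<ge> k0' \<and> jsupp {a..b} (gs' k) \<inter> ball x e \<noteq> {}}"
      using e finite_subset by blast
  next
    fix r
    obtain \<gamma> B where gB: "\<forall>k\<ge>k0. \<bar>2 powr (real_of_int k * \<gamma>) * cr_norm {a..b} r (gs k)\<bar> \<le> B"
      using s2 unfolding ser_ii_def grows_at_most_exp_def by blast
    have "\<bar>2 powr (real_of_int k * \<gamma>) * cr_norm {a..b} r (gs' k)\<bar> \<le> 2 powr (real m * \<gamma>) * B" if "k \<ge> k0'" for k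
    proof -
      have "2 powr (real_of_int k * \<gamma>) * cr_norm {a..b} r (gs' k) =
          2 powr (real m * \<gamma>) * (2 powr (real_of_int (k - int m) * \<gamma>) * cr_norm {a..b} r (gs (k - int m)))"
        by (simp add: gs'_def powr_add[symmetric] algebra_simps)
      then have "\<bar>2 powr (real_of_int k * \<gamma>) * cr_norm {a..b} r (gs' k)\<bar> =
          2 powr (real m * \<gamma>) * \<bar>2 powr (real_of_int (k - int m) * \<gamma>) * cr_norm {a..b} r (gs (k - int m))\<bar>"
        by (simp add: abs_mult)
      also have "\<dots> \<le> 2 powr (real m * \<gamma>) * B"
      proof (intro mult_left_mono)
        have "k - int m \<ge> k0" using that by (simp add: k0'_def)
        then show "\<bar>2 powr (real_of_int (k - int m) * \<gamma>) * cr_norm {a..b} r (gs (k - int m))\<bar> \<le> B"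
          using gB by blast
      qed simp
      finally show ?thesis .
    qed
    then show "grows_at_most_exp k0' (\<lambda>k. cr_norm {a..b} r (gs' k))"
      unfolding grows_at_most_exp_def by blast
  qed
  have iii: "finite (Jset a b c k0' gs' \<epsilon>) \<and> real (card (Jset a b c k0' gs' \<epsilon>)) \<le> L \<and>
      (\<forall>k\<in>Jset a b c k0' gs' \<epsilon>. 2 powr (- (real_of_int k * L)) \<le> \<epsilon>)"
    if e: "0 < 2 * \<epsilon> \<and> 2 * \<epsilon> < b - a" for \<epsilon>
  proof -
    have H: "finite (Jset a b c k0 gs \<epsilon>)" "real (card (Jset a b c k0 gs \<epsilon>)) \<le> L1"
        "\<And>k. k\<in>Jset a b c k0 gs \<epsilon> \<Longrightarrow> 2 powr (- (real_of_int k * L2)) \<le> C * \<epsilon>"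
      using U(3)[of \<epsilon>] e by auto
    have JJ: "Jset a b c k0' gs' \<epsilon> = (\<lambda>k. k + int m) ` Jset a b c k0 gs \<epsilon>"
      unfolding k0'_def gs'_def by (rule Jset_shift)
    have card: "card (Jset a b c k0' gs' \<epsilon>) = card (Jset a b c k0 gs \<epsilon>)"
      unfolding JJ by (rule card_image) (simp add: inj_on_def)
    have exps: "2 powr (- (real_of_int k' * L)) \<le> \<epsilon>" if k': "k' \<in> Jset a b c k0' gs' \<epsilon>" for k'
    proof -
      obtain k where k: "k \<in> Jset a b c k0 gs \<epsilon>" "k' = k + int m" using k' JJ by blast
      have kk0: "k \<ge> k0" using k(1) unfolding Jset_def by simp
      have nn: "real_of_int k' \<ge> 0" using k kk0 m1 by simp
      have "real_of_int k' * L2 \<le> real_of_int k' * L" using nn Lp by (intro mult_left_mono) auto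
      then have "2 powr (- (real_of_int k' * L)) \<le> 2 powr (- (real_of_int k' * L2))" by (intro powr_mono) auto
      also have "\<dots> = 2 powr (- (real_of_int k * L2)) * 2 powr (- (real m * L2))"
        by (simp add: k(2) powr_add[symmetric] algebra_simps)
      also have "\<dots> \<le> (C * \<epsilon>) * 2 powr (- (real m * L2))"
        by (intro mult_right_mono H(3) k(1)) simp
      also have "\<dots> = \<epsilon> * (C / 2 powr (real m * L2))"
        by (simp add: powr_minus divide_inverse)
      also have "\<dots> \<le> \<epsilon> * 1"
        using Cm e by (intro mult_left_mono) auto
      finally show ?thesis by simp
    qed
    show ?thesis using H(1,2) card exps Lp JJ by auto
  qed
  have hs: "((\<lambda>k. cs' k * gs' k x) has_sum f x) {k0'..}" if x: "x \<in> {a..b}" for x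
  proof -
    have "((\<lambda>k. cs k * gs k x) has_sum f x) {k0..}" using fsum x by blast
    then show ?thesis
      unfolding cs'_def gs'_def k0'_def
      using has_sum_reindex_bij_betw[OF bij_minus, where f="\<lambda>k. cs k * gs k x" and S="f x"] by simp
  qed
  have "pliable_series a b c k0' cs' gs'"
    unfolding pliable_series_iff using s2' iii Lp(1) by blast
  then show ?thesis unfolding pliable_def using ab cc fs hs by blast
qed

lemma smooth_add:
  assumes ab: "(a::real) < b" and u: "smooth_on_J {a..b} u" and v: "smooth_on_J {a..b} v"
  shows "smooth_on_J {a..b} (\<lambda>x. u x + v x) \<and>
    (\<forall>n. \<forall>x\<in>{a..b}. jderivs {a..b} n (\<lambda>x. u x + v x) x = jderivs {a..b} n u x + jderivs {a..b} n v x)"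
  by (rule smooth_by_rep[OF ab, where R="\<lambda>n x. jderivs {a..b} n u x + jderivs {a..b} n v x"])
     (auto intro!: derivative_eq_intros smooth_D[OF u] smooth_D[OF v])

lemma smooth_cmult:
  assumes ab: "(a::real) < b" and u: "smooth_on_J {a..b} u"
  shows "smooth_on_J {a..b} (\<lambda>x. C * u x) \<and>
    (\<forall>n. \<forall>x\<in>{a..b}. jderivs {a..b} n (\<lambda>x. C * u x) x = C * jderivs {a..b} n u x)"
  by (rule smooth_by_rep[OF ab, where R="\<lambda>n x. C * jderivs {a..b} n u x"])
     (auto intro!: derivative_eq_intros smooth_D[OF u])

lemma smooth_zero: "(a::real) < b \<Longrightarrow> smooth_on_J {a..b} (\<lambda>x. 0)"
  using smooth_const[of a b 0] by simp

lemma cr_norm_add: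
  assumes ab: "(a::real) < b" and u: "smooth_on_J {a..b} u" and v: "smooth_on_J {a..b} v"
  shows "cr_norm {a..b} r (\<lambda>x. u x + v x) \<le> (real r + 1) * (cr_norm {a..b} r u + cr_norm {a..b} r v)"
proof (rule cr_norm_le)
  show "a \<le> b" using ab by simp
  fix i x assume i: "i \<le> r" and x: "x \<in> {a..b}"
  have "\<bar>jderivs {a..b} i (\<lambda>x. u x + v x) x\<bar> = \<bar>jderivs {a..b} i u x + jderivs {a..b} i v x\<bar>"
    using smooth_add[OF ab u v] x by simp
  also have "\<dots> \<le> cr_norm {a..b} r u + cr_norm {a..b} r v"
    using cr_norm_ge[OF u i x] cr_norm_ge[OF v i x] by linarith
  finally show "\<bar>jderivs {a..b} i (\<lambda>x. u x + v x) x\<bar> \<le> cr_norm {a..b} r u + cr_norm {a..b} r v" .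
qed

lemma grows_affine:
  assumes g: "grows_at_most_exp k0 A" and K: "K \<ge> 0"
    and le: "\<And>k. k \<ge> k0 \<Longrightarrow> 0 \<le> A' k \<and> A' k \<le> K * A k + (if k = k0 then D else 0)"
    and A0: "\<And>k. k \<ge> k0 \<Longrightarrow> 0 \<le> A k"
  shows "grows_at_most_exp k0 A'"
proof -
  from g obtain \<gamma> B where gB: "\<forall>k\<ge>k0. \<bar>2 powr (real_of_int k * \<gamma>) * A k\<bar> \<le> B"
    unfolding grows_at_most_exp_def by blast
  have "\<bar>2 powr (real_of_int k * \<gamma>) * A' k\<bar> \<le> K * B + 2 powr (real_of_int k0 * \<gamma>) * \<bar>D\<bar>" if k: "k \<ge> k0" for k
  proof -
    have "\<bar>2 powr (real_of_int k * \<gamma>) * A' k\<bar> = 2 powr (real_of_int k * \<gamma>) * A' k"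
      using le[OF k] by simp
    also have "\<dots> \<le> 2 powr (real_of_int k * \<gamma>) * (K * A k + (if k = k0 then D else 0))"
      using le[OF k] by (intro mult_left_mono) auto
    also have "\<dots> = K * (2 powr (real_of_int k * \<gamma>) * A k) + (if k = k0 then 2 powr (real_of_int k0 * \<gamma>) * D else 0)"
      by (simp add: algebra_simps)
    also have "\<dots> \<le> K * B + 2 powr (real_of_int k0 * \<gamma>) * \<bar>D\<bar>"
    proof (rule add_mono)
      show "K * (2 powr (real_of_int k * \<gamma>) * A k) \<le> K * B"
        using gB k A0[OF k] K by (intro mult_left_mono) auto
      show "(if k = k0 then 2 powr (real_of_int k0 * \<gamma>) * D else 0) \<le> 2 powr (real_of_int k0 * \<gamma>) * \<bar>D\<bar>"
        by (auto intro!: mult_left_mono)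
    qed
    finally show ?thesis .
  qed
  then show ?thesis unfolding grows_at_most_exp_def by blast
qed

lemma part_c:
  assumes ab: "a < b" and cc: "c = a \<or> c = b" and fs: "smooth_on_J {a..b} f"
    and ser: "pliable_series a b c k0 cs gs"
    and fsum: "\<forall>x\<in>{a..b}. ((\<lambda>k. cs k * gs k x) has_sum f x) {k0..}"
    and hs: "smooth_on_J {a..b} h" and gsm: "smooth_on_J {a..b} g" and gsupp: "jsupp {a..b} g \<subseteq> {a..b} - {c}"
  shows "pliable {a..b} c (\<lambda>x. h x * f x + g x)"
proof -
  have s2: "ser_ii a b c k0 cs gs" using ser pliable_series_iff by blast
  from ser obtain L where L: "L > 0" "\<forall>\<epsilon>::real. 0 < 2 * \<epsilon> \<and> 2 * \<epsilon> < b - a \<longrightarrow>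
           finite (Jset a b c k0 gs \<epsilon>) \<and> real (card (Jset a b c k0 gs \<epsilon>)) \<le> L \<and>
               (\<forall>k\<in>Jset a b c k0 gs \<epsilon>. 2 powr (- (real_of_int k * L)) \<le> \<epsilon>)"
    unfolding pliable_series_iff by blast
  define e where "e k = (if k = k0 then (\<lambda>x. (1 / cs k0) * g x) else (\<lambda>x. 0))" for k
  define gs' where "gs' k = (\<lambda>x. h x * gs k x + e k x)" for k
  have esm: "smooth_on_J {a..b} (e k)" for k
  proof (cases "k = k0")
    case True
    then show ?thesis unfolding e_def using conjunct1[OF smooth_cmult[OF ab gsm, of "1 / cs k0"]] by simp
  qed (simp add: e_def smooth_zero[OF ab])
  have esupp: "jsupp {a..b} (e k) \<subseteq> jsupp {a..b} g" for k
    unfolding e_def using jsupp_mult[of "{a..b}" "\<lambda>_. 1 / cs k0" g] jsupp_zero[of "{a..b}"] by auto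
  have hgs: "smooth_on_J {a..b} (\<lambda>x. h x * gs k x)" if "k \<ge> k0" for k
    using smooth_mult[OF ab hs ser_ii_D(2)[OF s2 that]] by blast
  have gs'sm: "smooth_on_J {a..b} (gs' k)" if "k \<ge> k0" for k
    unfolding gs'_def using smooth_add[OF ab hgs[OF that] esm] by blast
  have gs'supp: "jsupp {a..b} (gs' k) \<subseteq> jsupp {a..b} (gs k) \<union> jsupp {a..b} g" for k
    unfolding gs'_def using jsupp_add[of "{a..b}" "\<lambda>x. h x * gs k x" "e k"] jsupp_mult[of "{a..b}" h "gs k"] esupp[of k]
    by blast
  have s2': "ser_ii a b c k0 cs gs'"
    unfolding ser_ii_def
  proof (intro conjI allI impI ballI)
    show "k0 \<le> k \<Longrightarrow> 0 < cs k" for k using ser_ii_D(1)[OF s2] by blast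
    show "superexp_conv cs 0" using s2 unfolding ser_ii_def by blast
    show "k0 \<le> k \<Longrightarrow> smooth_on_J {a..b} (gs' k)" for k by (rule gs'sm)
    show "compact (jsupp {a..b} (gs' k))" for k by (rule compact_jsupp)
    show "k0 \<le> k \<Longrightarrow> jsupp {a..b} (gs' k) \<subseteq> {a..b} - {c}" for k
      using ser_ii_D(3)[OF s2] gs'supp gsupp by blast
    fix x assume x: "x \<in> {a..b} - {c}"
    then obtain \<delta> where \<delta>: "\<delta> > 0" "finite {k. k \<ge> k0 \<and> jsupp {a..b} (gs k) \<inter> ball x \<delta> \<noteq> {}}"
      using s2 unfolding ser_ii_def by blast
    have "{k. k \<ge> k0 \<and> jsupp {a..b} (gs' k) \<inter> ball x \<delta> \<noteq> {}} \<subseteq>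
        insert k0 {k. k \<ge> k0 \<and> jsupp {a..b} (gs k) \<inter> ball x \<delta> \<noteq> {}}"
    proof
      fix k assume k: "k \<in> {k. k \<ge> k0 \<and> jsupp {a..b} (gs' k) \<inter> ball x \<delta> \<noteq> {}}"
      show "k \<in> insert k0 {k. k \<ge> k0 \<and> jsupp {a..b} (gs k) \<inter> ball x \<delta> \<noteq> {}}"
      proof (cases "k = k0")
        case False
        then have "jsupp {a..b} (e k) = {}" unfolding e_def using jsupp_zero by simp
        then have "jsupp {a..b} (gs' k) \<subseteq> jsupp {a..b} (gs k)"
          unfolding gs'_def using jsupp_add[of "{a..b}" "\<lambda>x. h x * gs k x" "e k"] jsupp_mult[of "{a..b}" h "gs k"]
          by blast
        then show ?thesis using k by blast
      qed simp
    qed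
    then show "\<exists>e>0. finite {k. k \<ge> k0 \<and> jsupp {a..b} (gs' k) \<inter> ball x e \<noteq> {}}"
      using \<delta> finite_subset by blast
  next
    fix r
    show "grows_at_most_exp k0 (\<lambda>k. cr_norm {a..b} r (gs' k))"
    proof (rule grows_affine)
      show "grows_at_most_exp k0 (\<lambda>k. cr_norm {a..b} r (gs k))" using s2 unfolding ser_ii_def by blast
      show "0 \<le> (real r + 1) * ((real r + 1) * (2 ^ r * cr_norm {a..b} r h))"
        using cr_norm_nonneg[OF hs] ab by simp
      fix k assume k: "k \<ge> k0"
      show "0 \<le> cr_norm {a..b} r (gs k)" using cr_norm_nonneg[OF ser_ii_D(2)[OF s2 k]] ab by simp
      have "cr_norm {a..b} r (gs' k) \<le> (real r + 1) * (cr_norm {a..b} r (\<lambda>x. h x * gs k x) + cr_norm {a..b} r (e k))"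
        unfolding gs'_def by (rule cr_norm_add[OF ab hgs[OF k] esm])
      also have "\<dots> \<le> (real r + 1) * ((real r + 1) * (2 ^ r * cr_norm {a..b} r h * cr_norm {a..b} r (gs k))
           + (if k = k0 then cr_norm {a..b} r (e k0) else 0))"
      proof (intro mult_left_mono add_mono)
        show "cr_norm {a..b} r (\<lambda>x. h x * gs k x) \<le> (real r + 1) * (2 ^ r * cr_norm {a..b} r h * cr_norm {a..b} r (gs k))"
          by (rule cr_norm_mult[OF ab hs ser_ii_D(2)[OF s2 k]])
        show "cr_norm {a..b} r (e k) \<le> (if k = k0 then cr_norm {a..b} r (e k0) else 0)"
        proof (cases "k = k0")
          case False
          then have ek: "e k = (\<lambda>x. 0)" by (simp add: e_def)
          have "cr_norm {a..b} r (\<lambda>x. 0) \<le> (real r + 1) * 0"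
            by (rule cr_norm_le) (use ab smooth_const[OF ab, of 0] in auto)
          then show ?thesis using False ek by simp
        qed simp
      qed simp
      also have "\<dots> = (real r + 1) * ((real r + 1) * (2 ^ r * cr_norm {a..b} r h)) * cr_norm {a..b} r (gs k)
           + (if k = k0 then (real r + 1) * cr_norm {a..b} r (e k0) else 0)"
        by (simp add: algebra_simps)
      finally show "0 \<le> cr_norm {a..b} r (gs' k) \<and> cr_norm {a..b} r (gs' k) \<le>
          (real r + 1) * ((real r + 1) * (2 ^ r * cr_norm {a..b} r h)) * cr_norm {a..b} r (gs k)
           + (if k = k0 then (real r + 1) * cr_norm {a..b} r (e k0) else 0)"
        using cr_norm_nonneg[OF gs'sm[OF k]] ab by simp
    qed
  qed
  have "closed (jsupp {a..b} g)" using compact_jsupp compact_imp_closed by blast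
  moreover have "c \<notin> jsupp {a..b} g" using gsupp by blast
  ultimately obtain \<delta> where \<delta>: "\<delta> > 0" "ball c \<delta> \<subseteq> - jsupp {a..b} g"
    using open_contains_ball[of "- jsupp {a..b} g"] by auto
  have main: "\<forall>\<epsilon>. 0 < \<epsilon> \<and> \<epsilon> < \<delta> / 2 \<and> 2 * \<epsilon> < b - a \<longrightarrow>
        finite (Jset a b c k0 gs' \<epsilon>) \<and> real (card (Jset a b c k0 gs' \<epsilon>)) \<le> L \<and>
        (\<forall>k\<in>Jset a b c k0 gs' \<epsilon>. 2 powr (- (real_of_int k * L)) \<le> 1 * \<epsilon>)"
  proof (intro allI impI)
    fix \<epsilon> :: real assume e: "0 < \<epsilon> \<and> \<epsilon> < \<delta> / 2 \<and> 2 * \<epsilon> < b - a"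
    have H: "finite (Jset a b c k0 gs \<epsilon>)" "real (card (Jset a b c k0 gs \<epsilon>)) \<le> L"
        "\<And>k. k\<in>Jset a b c k0 gs \<epsilon> \<Longrightarrow> 2 powr (- (real_of_int k * L)) \<le> \<epsilon>"
      using L(2)[rule_format, of \<epsilon>] e by auto
    have sub: "Jset a b c k0 gs' \<epsilon> \<subseteq> Jset a b c k0 gs \<epsilon>"
    proof
      fix k assume "k \<in> Jset a b c k0 gs' \<epsilon>"
      then obtain y where y: "k \<ge> k0" "y \<in> jsupp {a..b} (gs' k)" "y \<in> {a..b}" "\<epsilon> \<le> \<bar>y - c\<bar>" "\<bar>y - c\<bar> \<le> 2 * \<epsilon>"
        unfolding Jset_def by blast
      have "y \<in> ball c \<delta>" using y(5) e by (simp add: dist_real_def abs_minus_commute)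
      then have "y \<notin> jsupp {a..b} g" using \<delta>(2) by blast
      then have "y \<in> jsupp {a..b} (gs k)" using gs'supp y(2) by blast
      then show "k \<in> Jset a b c k0 gs \<epsilon>" unfolding Jset_def using y by blast
    qed
    have f1: "finite (Jset a b c k0 gs' \<epsilon>)" by (rule finite_subset[OF sub H(1)])
    have f2: "real (card (Jset a b c k0 gs' \<epsilon>)) \<le> L" using card_mono[OF H(1) sub] H(2) by linarith
    have f3: "\<forall>k\<in>Jset a b c k0 gs' \<epsilon>. 2 powr (- (real_of_int k * L)) \<le> 1 * \<epsilon>" using H(3) sub by auto
    show "finite (Jset a b c k0 gs' \<epsilon>) \<and> real (card (Jset a b c k0 gs' \<epsilon>)) \<le> L \<and>
        (\<forall>k\<in>Jset a b c k0 gs' \<epsilon>. 2 powr (- (real_of_int k * L)) \<le> 1 * \<epsilon>)"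
      using f1 f2 f3 by blast
  qed
  have w: "wk3 a b c k0 gs'"
    unfolding wk3_def
    by (rule exI[of _ L], rule exI[of _ L], rule exI[of _ 1], rule exI[of _ "\<delta> / 2"])
       (use L(1) \<delta>(1) main in simp)
  have hf: "smooth_on_J {a..b} (\<lambda>x. h x * f x)" using smooth_mult[OF ab hs fs] by blast
  have sm: "smooth_on_J {a..b} (\<lambda>x. h x * f x + g x)" using smooth_add[OF ab hf gsm] by blast
  have hsum: "((\<lambda>k. cs k * gs' k x) has_sum (h x * f x + g x)) {k0..}" if x: "x \<in> {a..b}" for x
  proof -
    have "((\<lambda>k. h x * (cs k * gs k x)) has_sum (h x * f x)) {k0..}"
      using fsum x has_sum_cmult_right by blast
    moreover have "((\<lambda>k. if k = k0 then g x else 0) has_sum g x) {k0..}"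
      by (rule has_sum_finite_neutralI[of "{k0}"]) auto
    ultimately have "((\<lambda>k. h x * (cs k * gs k x) + (if k = k0 then g x else 0)) has_sum (h x * f x + g x)) {k0..}"
      by (rule has_sum_add)
    moreover have "cs k * gs' k x = h x * (cs k * gs k x) + (if k = k0 then g x else 0)" if "k \<in> {k0..}" for k
      using ser_ii_D(1)[OF s2, of k0] by (auto simp: gs'_def e_def algebra_simps)
    ultimately show ?thesis using has_sum_cong by (metis (no_types, lifting))
  qed
  show ?thesis by (rule shift_pliable[OF ab cc sm s2' w]) (use hsum in blast)
qed

fun Qf :: "real set \<Rightarrow> (real \<Rightarrow> real) \<Rightarrow> bool list \<Rightarrow> real \<Rightarrow> real" where
  "Qf K \<phi> [] = (\<lambda>x. 1)"
| "Qf K \<phi> (False # t) = jderiv K (Qf K \<phi> t)"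
| "Qf K \<phi> (True # t) = (\<lambda>x. Qf K \<phi> t x * jderiv K \<phi> x)"

lemma jderiv_as_jderivs: "jderiv K u = jderivs K (Suc 0) u"
  by (simp add: jderivs_Suc)

lemma Qf_smooth:
  assumes ab: "(a::real) < b" and ph: "smooth_on_J {a..b} \<phi>"
  shows "smooth_on_J {a..b} (Qf {a..b} \<phi> t)"
proof (induction t)
  case Nil then show ?case using smooth_const[OF ab, of 1] by simp
next
  case (Cons x t)
  show ?case
  proof (cases x)
    case True
    have "smooth_on_J {a..b} (jderiv {a..b} \<phi>)" unfolding jderiv_as_jderivs by (rule smooth_jderivs[OF ph])
    then show ?thesis using True smooth_mult[OF ab Cons.IH] by simp
  next
    case False
    then show ?thesis using smooth_jderivs[OF Cons.IH, of "Suc 0"] by (simp add: jderiv_as_jderivs)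
  qed
qed

definition compR :: "real set \<Rightarrow> real set \<Rightarrow> (real \<Rightarrow> real) \<Rightarrow> (real \<Rightarrow> real) \<Rightarrow> nat \<Rightarrow> real \<Rightarrow> real" where
  "compR K J \<phi> g n x = (\<Sum>t\<in>{t::bool list. length t = n}.
      Qf K \<phi> t x * jderivs J (count_list t True) g (\<phi> x))"

lemma smooth_comp:
  assumes ab: "(a::real) < b" and ab': "(a'::real) < b'" and ph: "smooth_on_J {a'..b'} \<phi>"
    and img: "\<phi> ` {a'..b'} \<subseteq> {a..b}" and g: "smooth_on_J {a..b} g"
  shows "smooth_on_J {a'..b'} (\<lambda>x. g (\<phi> x)) \<and>
    (\<forall>n. \<forall>x\<in>{a'..b'}. jderivs {a'..b'} n (\<lambda>x. g (\<phi> x)) x = compR {a'..b'} {a..b} \<phi> g n x)"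
proof (rule smooth_by_rep[OF ab'])
  fix n x assume x: "x \<in> {a'..b'}"
  have phx: "\<phi> x \<in> {a..b}" using img x by blast
  have dphi: "(\<phi> has_real_derivative jderiv {a'..b'} \<phi> x) (at x within {a'..b'})"
    using smooth_D[OF ph x, of 0] by (simp add: jderivs_Suc)
  have dG: "((\<lambda>y. jderivs {a..b} m g (\<phi> y)) has_real_derivative
       jderivs {a..b} (Suc m) g (\<phi> x) * jderiv {a'..b'} \<phi> x) (at x within {a'..b'})" for m
  proof -
    have "(jderivs {a..b} m g has_real_derivative jderivs {a..b} (Suc m) g (\<phi> x)) (at (\<phi> x) within \<phi> ` {a'..b'})"
      by (rule has_field_derivative_subset[OF smooth_D[OF g phx] img])
    from DERIV_image_chain[OF this dphi] show ?thesis by (simp add: o_def)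
  qed
  have dQ: "(Qf {a'..b'} \<phi> t has_real_derivative Qf {a'..b'} \<phi> (False # t) x) (at x within {a'..b'})" for t
    using smooth_D[OF Qf_smooth[OF ab' ph, of t] x, of 0] by (simp add: jderivs_Suc)
  have "(compR {a'..b'} {a..b} \<phi> g n has_real_derivative
      (\<Sum>t\<in>{t::bool list. length t = n}.
         Qf {a'..b'} \<phi> (False # t) x * jderivs {a..b} (count_list t True) g (\<phi> x)
       + Qf {a'..b'} \<phi> t x * (jderivs {a..b} (Suc (count_list t True)) g (\<phi> x) * jderiv {a'..b'} \<phi> x)))
     (at x within {a'..b'})"
    unfolding compR_def
  proof (intro DERIV_sum)
    fix t :: "bool list"
    show "((\<lambda>x. Qf {a'..b'} \<phi> t x * jderivs {a..b} (count_list t True) g (\<phi> x)) has_real_derivative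
           Qf {a'..b'} \<phi> (False # t) x * jderivs {a..b} (count_list t True) g (\<phi> x) +
           Qf {a'..b'} \<phi> t x * (jderivs {a..b} (Suc (count_list t True)) g (\<phi> x) * jderiv {a'..b'} \<phi> x))
           (at x within {a'..b'})"
      using DERIV_mult[OF dQ[of t] dG[of "count_list t True"]] by (simp add: algebra_simps)
  qed
  also have "(\<Sum>t\<in>{t::bool list. length t = n}.
         Qf {a'..b'} \<phi> (False # t) x * jderivs {a..b} (count_list t True) g (\<phi> x)
       + Qf {a'..b'} \<phi> t x * (jderivs {a..b} (Suc (count_list t True)) g (\<phi> x) * jderiv {a'..b'} \<phi> x))
     = compR {a'..b'} {a..b} \<phi> g (Suc n) x"
    unfolding compR_def sum_bool_lists_Suc by (simp add: algebra_simps)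
  finally show "(compR {a'..b'} {a..b} \<phi> g n has_real_derivative compR {a'..b'} {a..b} \<phi> g (Suc n) x)
      (at x within {a'..b'})" .
next
  fix x show "g (\<phi> x) = compR {a'..b'} {a..b} \<phi> g 0 x" by (simp add: compR_def)
qed

lemma cr_norm_comp:
  assumes ab: "(a::real) < b" and ab': "(a'::real) < b'" and ph: "smooth_on_J {a'..b'} \<phi>"
    and img: "\<phi> ` {a'..b'} \<subseteq> {a..b}"
  shows "\<exists>A\<ge>0. \<forall>g. smooth_on_J {a..b} g \<longrightarrow> cr_norm {a'..b'} r (\<lambda>x. g (\<phi> x)) \<le> A * cr_norm {a..b} r g"
proof -
  define S where "S t = Sup ((\<lambda>x. \<bar>Qf {a'..b'} \<phi> t x\<bar>) ` {a'..b'})" for t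
  have S0: "S t \<ge> 0" for t unfolding S_def
    by (rule sup_abs_nonneg) (use smooth_cont0[OF Qf_smooth[OF ab' ph]] ab' in auto)
  have Sx: "\<bar>Qf {a'..b'} \<phi> t x\<bar> \<le> S t" if "x \<in> {a'..b'}" for t x
    unfolding S_def by (rule sup_abs_le[OF smooth_cont0[OF Qf_smooth[OF ab' ph]] that])
  define B where "B = (\<Sum>i\<le>r. \<Sum>t\<in>{t::bool list. length t = i}. S t)"
  have B0: "B \<ge> 0" unfolding B_def using S0 by (intro sum_nonneg) auto
  show ?thesis
  proof (intro exI[of _ "(real r + 1) * B"] conjI allI impI)
    show "0 \<le> (real r + 1) * B" using B0 by simp
    fix g assume g: "smooth_on_J {a..b} g"
    have N0: "0 \<le> cr_norm {a..b} r g" using cr_norm_nonneg[OF g] ab by simp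
    have "cr_norm {a'..b'} r (\<lambda>x. g (\<phi> x)) \<le> (real r + 1) * (B * cr_norm {a..b} r g)"
    proof (rule cr_norm_le)
      show "a' \<le> b'" using ab' by simp
      fix i x assume i: "i \<le> r" and x: "x \<in> {a'..b'}"
      have phx: "\<phi> x \<in> {a..b}" using img x by blast
      have "\<bar>jderivs {a'..b'} i (\<lambda>x. g (\<phi> x)) x\<bar> = \<bar>compR {a'..b'} {a..b} \<phi> g i x\<bar>"
        using smooth_comp[OF ab ab' ph img g] x by simp
      also have "\<dots> \<le> (\<Sum>t\<in>{t::bool list. length t = i}. S t * cr_norm {a..b} r g)"
        unfolding compR_def
      proof (rule order.trans[OF sum_abs], rule sum_mono)
        fix t :: "bool list" assume t: "t \<in> {t. length t = i}"
        have "count_list t True \<le> r" using order.trans[OF count_le_length[of t True]] t i by auto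
        then show "\<bar>Qf {a'..b'} \<phi> t x * jderivs {a..b} (count_list t True) g (\<phi> x)\<bar> \<le> S t * cr_norm {a..b} r g"
          unfolding abs_mult using Sx[OF x] cr_norm_ge[OF g _ phx] S0
          by (intro mult_mono) auto
      qed
      also have "\<dots> = (\<Sum>t\<in>{t::bool list. length t = i}. S t) * cr_norm {a..b} r g"
        by (simp add: sum_distrib_right)
      also have "\<dots> \<le> B * cr_norm {a..b} r g"
      proof (rule mult_right_mono[OF _ N0])
        show "(\<Sum>t\<in>{t::bool list. length t = i}. S t) \<le> B"
          unfolding B_def using i S0
          by (intro member_le_sum[of i "{..r}" "\<lambda>i. \<Sum>t\<in>{t::bool list. length t = i}. S t"]) (auto intro: sum_nonneg)
      qed
      finally show "\<bar>jderivs {a'..b'} i (\<lambda>x. g (\<phi> x)) x\<bar> \<le> B * cr_norm {a..b} r g" .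
    qed
    then show "cr_norm {a'..b'} r (\<lambda>x. g (\<phi> x)) \<le> (real r + 1) * B * cr_norm {a..b} r g"
      by (simp add: mult.assoc)
  qed
qed

lemma lipschitz_smooth:
  assumes ab: "(a::real) < b" and u: "smooth_on_J {a..b} u"
  shows "\<exists>M\<ge>1. \<forall>x\<in>{a..b}. \<forall>y\<in>{a..b}. \<bar>u x - u y\<bar> \<le> M * \<bar>x - y\<bar>"
proof -
  define B where "B = Sup ((\<lambda>x. \<bar>jderivs {a..b} (Suc 0) u x\<bar>) ` {a..b})"
  have Bx: "\<bar>jderivs {a..b} (Suc 0) u x\<bar> \<le> B" if "x \<in> {a..b}" for x
    unfolding B_def by (rule sup_abs_le[OF smooth_cont[OF u] that])
  have "\<bar>u x - u y\<bar> \<le> max 1 B * \<bar>x - y\<bar>" if x: "x \<in> {a..b}" and y: "y \<in> {a..b}" for x y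
  proof -
    have "norm (u x - u y) \<le> max 1 B * norm (x - y)"
    proof (rule field_differentiable_bound[OF convex_real_interval(5) _ _ x y])
      fix z assume z: "z \<in> {a..b}"
      show "(u has_field_derivative jderivs {a..b} (Suc 0) u z) (at z within {a..b})"
        using smooth_D[OF u z, of 0] by simp
      show "norm (jderivs {a..b} (Suc 0) u z) \<le> max 1 B" using Bx[OF z] by simp
    qed
    then show ?thesis by simp
  qed
  then show ?thesis by (intro exI[of _ "max 1 B"]) auto
qed

lemma dyadic:
  fixes s :: real
  shows "1 \<le> s \<Longrightarrow> s \<le> 2 ^ Suc n \<Longrightarrow> \<exists>j\<le>n. 2 ^ j \<le> s \<and> s \<le> 2 ^ Suc j"
proof (induction n)
  case 0 then show ?case by auto
next
  case (Suc n)
  show ?case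
  proof (cases "s \<le> 2 ^ Suc n")
    case True then show ?thesis using Suc by (meson le_SucI)
  next
    case False then show ?thesis using Suc by (intro exI[of _ "Suc n"]) auto
  qed
qed

lemma diffeo_basic:
  assumes ab: "(a::real) < b" and dif: "diffeo_J {a'..b'} {a..b} d"
  defines "e \<equiv> the_inv_into {a'..b'} d"
  shows "a' < b'" "\<And>y. y \<in> {a'..b'} \<Longrightarrow> d y \<in> {a..b}" "\<And>x. x \<in> {a..b} \<Longrightarrow> e x \<in> {a'..b'}"
    "\<And>y. y \<in> {a'..b'} \<Longrightarrow> e (d y) = y" "\<And>x. x \<in> {a..b} \<Longrightarrow> d (e x) = x"
    "smooth_on_J {a'..b'} d" "smooth_on_J {a..b} e" "inj_on d {a'..b'}"
proof -
  have bij: "bij_betw d {a'..b'} {a..b}" using dif unfolding diffeo_J_def by blast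
  have inj: "inj_on d {a'..b'}" and img: "d ` {a'..b'} = {a..b}" using bij unfolding bij_betw_def by auto
  show "inj_on d {a'..b'}" by (rule inj)
  show "smooth_on_J {a'..b'} d" "smooth_on_J {a..b} e" using dif unfolding diffeo_J_def e_def by auto
  show "a' < b'"
  proof (rule ccontr)
    assume "\<not> a' < b'"
    then have "{a'..b'} \<subseteq> {a'}" by auto
    then have "finite {a'..b'}" using finite_subset by blast
    then have "finite {a..b}" using img by (metis finite_imageI)
    then show False using infinite_Icc[OF ab] by simp
  qed
  show "\<And>y. y \<in> {a'..b'} \<Longrightarrow> d y \<in> {a..b}" using img by blast
  show "\<And>x. x \<in> {a..b} \<Longrightarrow> e x \<in> {a'..b'}" unfolding e_def using the_inv_into_into[OF inj] img by blast
  show "\<And>y. y \<in> {a'..b'} \<Longrightarrow> e (d y) = y" unfolding e_def by (rule the_inv_into_f_f[OF inj])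
  show "\<And>x. x \<in> {a..b} \<Longrightarrow> d (e x) = x" unfolding e_def using f_the_inv_into_f[OF inj] img by blast
qed

lemma diffeo_endpoint:
  assumes ab: "(a::real) < b" and dif: "diffeo_J {a'..b'} {a..b} d" and cc: "c = a \<or> c = b"
  shows "the_inv_into {a'..b'} d c = a' \<or> the_inv_into {a'..b'} d c = b'"
proof (rule ccontr)
  note D = diffeo_basic[OF ab dif]
  define c' where "c' = the_inv_into {a'..b'} d c"
  have cJ: "c \<in> {a..b}" using cc ab by auto
  assume "\<not> ?thesis"
  then have "a' < c'" "c' < b'" using D(3)[OF cJ] unfolding c'_def by auto
  from continuous_inj_imp_mono[OF this smooth_cont0[OF D(6)] D(8)]
  have "(d a' < d c' \<and> d c' < d b') \<or> (d b' < d c' \<and> d c' < d a')" .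
  moreover have "d c' = c" unfolding c'_def using D(5)[OF cJ] by simp
  moreover have "d a' \<in> {a..b}" "d b' \<in> {a..b}" using D(1) by (intro D(2), simp)+
  ultimately show False using cc by auto
qed

lemma part_e:
  assumes ab: "a < b" and cc: "c = a \<or> c = b" and fs: "smooth_on_J {a..b} f"
    and ser: "pliable_series a b c k0 cs gs"
    and fsum: "\<forall>x\<in>{a..b}. ((\<lambda>k. cs k * gs k x) has_sum f x) {k0..}"
    and dif: "diffeo_J {a'..b'} {a..b} d"
  shows "pliable {a'..b'} (the_inv_into {a'..b'} d c) (f \<circ> d)"
proof -
  note D = diffeo_basic[OF ab dif]
  define e where "e = the_inv_into {a'..b'} d"
  define c' where "c' = e c"
  have ab': "a' < b'" by (rule D(1))
  have cJ: "c \<in> {a..b}" using cc ab by auto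
  have c'K: "c' \<in> {a'..b'}" unfolding c'_def e_def by (rule D(3)[OF cJ])
  have cc': "c' = a' \<or> c' = b'" unfolding c'_def e_def by (rule diffeo_endpoint[OF ab dif cc])
  have img: "d ` {a'..b'} \<subseteq> {a..b}" using D(2) by blast
  have dK: "\<And>y. y \<in> {a'..b'} \<Longrightarrow> d y \<in> {a..b}" by (rule D(2))
  have eJ: "\<And>x. x \<in> {a..b} \<Longrightarrow> e x \<in> {a'..b'}" unfolding e_def by (rule D(3))
  have ed: "\<And>y. y \<in> {a'..b'} \<Longrightarrow> e (d y) = y" unfolding e_def by (rule D(4))
  have de: "\<And>x. x \<in> {a..b} \<Longrightarrow> d (e x) = x" unfolding e_def by (rule D(5))
  have dsm: "smooth_on_J {a'..b'} d" by (rule D(6))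
  have esm: "smooth_on_J {a..b} e" unfolding e_def by (rule D(7))
  have dc': "d c' = c" unfolding c'_def by (rule de[OF cJ])
  have s2: "ser_ii a b c k0 cs gs" using ser pliable_series_iff by blast
  from ser obtain L where L: "L > 0" "\<forall>\<epsilon>::real. 0 < 2 * \<epsilon> \<and> 2 * \<epsilon> < b - a \<longrightarrow>
           finite (Jset a b c k0 gs \<epsilon>) \<and> real (card (Jset a b c k0 gs \<epsilon>)) \<le> L \<and>
               (\<forall>k\<in>Jset a b c k0 gs \<epsilon>. 2 powr (- (real_of_int k * L)) \<le> \<epsilon>)"
    unfolding pliable_series_iff by blast
  obtain M1 where M1: "M1 \<ge> 1" "\<And>x y. x \<in> {a'..b'} \<Longrightarrow> y \<in> {a'..b'} \<Longrightarrow> \<bar>d x - d y\<bar> \<le> M1 * \<bar>x - y\<bar>"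
    using lipschitz_smooth[OF ab' dsm] by blast
  obtain M2 where M2: "M2 \<ge> 1" "\<And>x y. x \<in> {a..b} \<Longrightarrow> y \<in> {a..b} \<Longrightarrow> \<bar>e x - e y\<bar> \<le> M2 * \<bar>x - y\<bar>"
    using lipschitz_smooth[OF ab esm] by blast
  define gs' where "gs' k = (\<lambda>y. gs k (d y))" for k
  define SU where "SU k = e ` jsupp {a..b} (gs k)" for k
  have supp: "jsupp {a'..b'} (gs' k) \<subseteq> SU k" for k
  proof -
    have "compact (SU k)" unfolding SU_def
      by (rule compact_continuous_image[OF continuous_on_subset[OF smooth_cont0[OF esm] jsupp_subset'] compact_jsupp])
    then have cl: "closed (SU k)" by (rule compact_imp_closed)
    have "{y\<in>{a'..b'}. gs' k y \<noteq> 0} \<subseteq> SU k"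
    proof
      fix y assume y: "y \<in> {y\<in>{a'..b'}. gs' k y \<noteq> 0}"
      then have "d y \<in> {x\<in>{a..b}. gs k x \<noteq> 0}" using dK by (simp add: gs'_def)
      then have "d y \<in> jsupp {a..b} (gs k)" unfolding jsupp_def by (rule closure_subset[THEN subsetD])
      moreover have "y = e (d y)" using ed y by simp
      ultimately show "y \<in> SU k" unfolding SU_def by blast
    qed
    then show ?thesis unfolding jsupp_def[of "{a'..b'}"] using cl by (rule closure_minimal)
  qed
  have SUsub: "SU k \<subseteq> {a'..b'} - {c'}" if k: "k \<ge> k0" for k
  proof
    fix y assume "y \<in> SU k"
    then obtain w where w: "w \<in> jsupp {a..b} (gs k)" "y = e w" unfolding SU_def by blast
    have wJ: "w \<in> {a..b} - {c}" using w(1) ser_ii_D(3)[OF s2 k] by blast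
    have "y \<noteq> c'"
    proof
      assume "y = c'"
      then have "d (e w) = d (e c)" using w(2) c'_def by simp
      then show False using de wJ cJ by auto
    qed
    then show "y \<in> {a'..b'} - {c'}" using eJ wJ w(2) by auto
  qed
  have gs'sm: "smooth_on_J {a'..b'} (gs' k)" if "k \<ge> k0" for k
    unfolding gs'_def using smooth_comp[OF ab ab' dsm img ser_ii_D(2)[OF s2 that]] by blast
  have s2': "ser_ii a' b' c' k0 cs gs'"
    unfolding ser_ii_def
  proof (intro conjI allI impI ballI)
    show "k0 \<le> k \<Longrightarrow> 0 < cs k" for k using ser_ii_D(1)[OF s2] by blast
    show "superexp_conv cs 0" using s2 unfolding ser_ii_def by blast
    show "k0 \<le> k \<Longrightarrow> smooth_on_J {a'..b'} (gs' k)" for k by (rule gs'sm)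
    show "compact (jsupp {a'..b'} (gs' k))" for k by (rule compact_jsupp)
    show "k0 \<le> k \<Longrightarrow> jsupp {a'..b'} (gs' k) \<subseteq> {a'..b'} - {c'}" for k
      using supp SUsub by blast
    fix y assume y: "y \<in> {a'..b'} - {c'}"
    have dyJ: "d y \<in> {a..b} - {c}"
    proof -
      have "d y \<noteq> c"
      proof
        assume "d y = c" then have "e (d y) = c'" unfolding c'_def by simp
        then show False using ed y by auto
      qed
      then show ?thesis using dK y by auto
    qed
    then obtain r where r: "r > 0" "finite {k. k \<ge> k0 \<and> jsupp {a..b} (gs k) \<inter> ball (d y) r \<noteq> {}}"
      using s2 unfolding ser_ii_def by blast
    have "{k. k \<ge> k0 \<and> jsupp {a'..b'} (gs' k) \<inter> ball y (r / M1) \<noteq> {}} \<subseteq>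
        {k. k \<ge> k0 \<and> jsupp {a..b} (gs k) \<inter> ball (d y) r \<noteq> {}}"
    proof (intro subsetI, elim CollectE conjE, intro CollectI conjI)
      fix k assume k: "k \<ge> k0" "jsupp {a'..b'} (gs' k) \<inter> ball y (r / M1) \<noteq> {}"
      show "k \<ge> k0" by (rule k(1))
      from k(2) obtain z where z: "z \<in> jsupp {a'..b'} (gs' k)" "dist y z < r / M1" by auto
      then obtain w where w: "w \<in> jsupp {a..b} (gs k)" "z = e w" using supp unfolding SU_def by blast
      have wJ: "w \<in> {a..b}" using w(1) jsupp_subset' by blast
      have zK: "z \<in> {a'..b'}" using w(2) eJ[OF wJ] by simp
      have "\<bar>w - d y\<bar> = \<bar>d z - d y\<bar>" using w(2) de[OF wJ] by simp
      also have "\<dots> \<le> M1 * \<bar>z - y\<bar>" using M1(2)[OF zK] y by simp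
      also have "\<dots> < M1 * (r / M1)" using z(2) M1(1) by (intro mult_strict_left_mono) (auto simp: dist_real_def abs_minus_commute)
      also have "\<dots> = r" using M1(1) by simp
      finally have "w \<in> ball (d y) r" by (simp add: dist_real_def abs_minus_commute)
      then show "jsupp {a..b} (gs k) \<inter> ball (d y) r \<noteq> {}" using w(1) by blast
    qed
    then show "\<exists>e>0. finite {k. k \<ge> k0 \<and> jsupp {a'..b'} (gs' k) \<inter> ball y e \<noteq> {}}"
      using r M1(1) finite_subset by (intro exI[of _ "r / M1"]) auto
  next
    fix r
    obtain A where A: "A \<ge> 0" "\<And>g. smooth_on_J {a..b} g \<Longrightarrow> cr_norm {a'..b'} r (\<lambda>x. g (d x)) \<le> A * cr_norm {a..b} r g"
      using cr_norm_comp[OF ab ab' dsm img, of r] by blast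
    show "grows_at_most_exp k0 (\<lambda>k. cr_norm {a'..b'} r (gs' k))"
    proof (rule grows_affine[where D=0])
      show "grows_at_most_exp k0 (\<lambda>k. cr_norm {a..b} r (gs k))" using s2 unfolding ser_ii_def by blast
      show "A \<ge> 0" by (rule A(1))
      fix k assume k: "k \<ge> k0"
      show "0 \<le> cr_norm {a..b} r (gs k)" using cr_norm_nonneg[OF ser_ii_D(2)[OF s2 k]] ab by simp
      show "0 \<le> cr_norm {a'..b'} r (gs' k) \<and> cr_norm {a'..b'} r (gs' k) \<le> A * cr_norm {a..b} r (gs k) + (if k = k0 then 0 else 0)"
        using cr_norm_nonneg[OF gs'sm[OF k]] ab' A(2)[OF ser_ii_D(2)[OF s2 k]] by (simp add: gs'_def)
    qed
  qed
  obtain n :: nat where n: "2 * (M1 * M2) < 2 ^ n" using real_arch_pow[of "2::real"] by auto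
  define N where "N = Suc n"
  have P1: "1 \<le> M1 * M2" using mult_mono[OF M1(1) M2(1)] M1(1) by simp
  have "(2::real) ^ n \<le> 2 ^ Suc n" by simp
  then have PN: "2 * (M1 * M2) \<le> 2 ^ Suc n" using n by linarith
  define e0 where "e0 = M2 * (b - a) / 2 ^ N"
  have e0p: "e0 > 0" unfolding e0_def using M2(1) ab by simp
  have main: "finite (Jset a' b' c' k0 gs' \<epsilon>) \<and> real (card (Jset a' b' c' k0 gs' \<epsilon>)) \<le> real N * L \<and>
        (\<forall>k\<in>Jset a' b' c' k0 gs' \<epsilon>. 2 powr (- (real_of_int k * L)) \<le> (2 ^ N / M2) * \<epsilon>)"
    if eps: "0 < \<epsilon>" "\<epsilon> < e0" for \<epsilon>
  proof -
    define ej where "ej j = \<epsilon> * 2 ^ j / M2" for j :: nat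
    have ejp: "0 < 2 * ej j" for j unfolding ej_def using eps M2(1) by simp
    have ejb: "2 * ej j < b - a" if "j \<le> n" for j
    proof -
      have "2 * ej j = \<epsilon> * 2 ^ Suc j / M2" unfolding ej_def by simp
      also have "\<dots> \<le> \<epsilon> * 2 ^ N / M2"
        using that eps M2(1) unfolding N_def by (intro divide_right_mono mult_left_mono power_increasing) auto
      also have "\<dots> < e0 * 2 ^ N / M2"
        using eps M2(1) by (intro divide_strict_right_mono mult_strict_right_mono) auto
      also have "\<dots> = b - a" unfolding e0_def using M2(1) by simp
      finally show ?thesis .
    qed
    have H: "finite (Jset a b c k0 gs (ej j))" "real (card (Jset a b c k0 gs (ej j))) \<le> L"
        "\<And>k. k\<in>Jset a b c k0 gs (ej j) \<Longrightarrow> 2 powr (- (real_of_int k * L)) \<le> ej j" if "j \<le> n" for j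
      using L(2)[rule_format, of "ej j"] ejp[of j] ejb[OF that] by auto
    have cover: "Jset a' b' c' k0 gs' \<epsilon> \<subseteq> (\<Union>j\<in>{..n}. Jset a b c k0 gs (ej j))"
    proof
      fix k assume "k \<in> Jset a' b' c' k0 gs' \<epsilon>"
      then obtain y where y: "k \<ge> k0" "y \<in> jsupp {a'..b'} (gs' k)" "y \<in> {a'..b'}" "\<epsilon> \<le> \<bar>y - c'\<bar>" "\<bar>y - c'\<bar> \<le> 2 * \<epsilon>"
        unfolding Jset_def by blast
      obtain w where w: "w \<in> jsupp {a..b} (gs k)" "y = e w" using supp y(2) unfolding SU_def by blast
      have wJ: "w \<in> {a..b}" using w(1) jsupp_subset' by blast
      define t where "t = \<bar>w - c\<bar>"
      have t1: "\<epsilon> \<le> M2 * t"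
      proof -
        have "\<epsilon> \<le> \<bar>e w - e c\<bar>" using y(4) w(2) c'_def by simp
        also have "\<dots> \<le> M2 * t" unfolding t_def by (rule M2(2)[OF wJ cJ])
        finally show ?thesis .
      qed
      have t2: "t \<le> 2 * M1 * \<epsilon>"
      proof -
        have "t = \<bar>d y - d c'\<bar>" unfolding t_def using de[OF wJ] w(2) dc' by simp
        also have "\<dots> \<le> M1 * \<bar>y - c'\<bar>" by (rule M1(2)[OF y(3) c'K])
        also have "\<dots> \<le> M1 * (2 * \<epsilon>)" using y(5) M1(1) by (intro mult_left_mono) auto
        finally show ?thesis by simp
      qed
      have s1: "1 \<le> M2 * t / \<epsilon>" using t1 eps by simp
      have "M2 * t \<le> M2 * (2 * M1 * \<epsilon>)" using t2 M2(1) by (intro mult_left_mono) auto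
      then have "M2 * t / \<epsilon> \<le> 2 * (M1 * M2)" using eps by (simp add: divide_le_eq algebra_simps)
      then have s2: "M2 * t / \<epsilon> \<le> 2 ^ Suc n" using PN by linarith
      obtain j where j: "j \<le> n" "2 ^ j \<le> M2 * t / \<epsilon>" "M2 * t / \<epsilon> \<le> 2 ^ Suc j"
        using dyadic[OF s1 s2] by blast
      have lo: "ej j \<le> t"
        using j(2) eps M2(1) unfolding ej_def by (simp add: le_divide_eq pos_divide_le_eq algebra_simps)
      have hi: "t \<le> 2 * ej j"
        using j(3) eps M2(1) unfolding ej_def by (simp add: divide_le_eq le_divide_eq algebra_simps)
      have "k \<in> Jset a b c k0 gs (ej j)"
        unfolding Jset_def using y(1) w(1) wJ lo hi unfolding t_def by blast
      then show "k \<in> (\<Union>j\<in>{..n}. Jset a b c k0 gs (ej j))" using j(1) by blast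
    qed
    have fin: "finite (\<Union>j\<in>{..n}. Jset a b c k0 gs (ej j))" using H(1) by blast
    have "card (Jset a' b' c' k0 gs' \<epsilon>) \<le> card (\<Union>j\<in>{..n}. Jset a b c k0 gs (ej j))"
      by (rule card_mono[OF fin cover])
    also have "\<dots> \<le> (\<Sum>j\<in>{..n}. card (Jset a b c k0 gs (ej j)))" by (rule card_UN_le) simp
    finally have "real (card (Jset a' b' c' k0 gs' \<epsilon>)) \<le> (\<Sum>j\<in>{..n}. real (card (Jset a b c k0 gs (ej j))))"
      by (metis of_nat_le_iff of_nat_sum)
    also have "\<dots> \<le> (\<Sum>j\<in>{..n}. L)" using H(2) by (intro sum_mono) auto
    also have "\<dots> = real N * L" unfolding N_def by simp
    finally have cd: "real (card (Jset a' b' c' k0 gs' \<epsilon>)) \<le> real N * L" .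
    have ex: "2 powr (- (real_of_int k * L)) \<le> (2 ^ N / M2) * \<epsilon>" if "k \<in> Jset a' b' c' k0 gs' \<epsilon>" for k
    proof -
      have "k \<in> (\<Union>j\<in>{..n}. Jset a b c k0 gs (ej j))" using cover that by (rule subsetD)
      then obtain j where j0: "j \<in> {..n}" "k \<in> Jset a b c k0 gs (ej j)" by (rule UN_E)
      then have j: "j \<le> n" "k \<in> Jset a b c k0 gs (ej j)" by auto
      have "2 powr (- (real_of_int k * L)) \<le> ej j" by (rule H(3)[OF j])
      also have "\<dots> \<le> \<epsilon> * 2 ^ N / M2" unfolding ej_def N_def
        using j(1) eps M2(1) by (intro divide_right_mono mult_left_mono power_increasing) auto
      finally show ?thesis by (simp add: mult.commute)
    qed
    show ?thesis using finite_subset[OF cover fin] cd ex by blast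
  qed
  have w: "wk3 a' b' c' k0 gs'"
    unfolding wk3_def
    by (rule exI[of _ "real N * L"], rule exI[of _ L], rule exI[of _ "2 ^ N / M2"], rule exI[of _ e0])
       (use L(1) M2(1) e0p main in auto)
  have fd: "smooth_on_J {a'..b'} (\<lambda>y. f (d y))" using smooth_comp[OF ab ab' dsm img fs] by blast
  have hs: "\<forall>y\<in>{a'..b'}. ((\<lambda>k. cs k * gs' k y) has_sum f (d y)) {k0..}"
    using fsum dK by (simp add: gs'_def)
  have "pliable {a'..b'} c' (\<lambda>y. f (d y))" by (rule shift_pliable[OF ab' cc' fd s2' w hs])
  then show ?thesis unfolding c'_def e_def by (simp add: comp_def)
qed

lemma isometry_affine:
  fixes \<iota> :: "real \<Rightarrow> real"
  assumes iso: "\<forall>x y. dist (\<iota> x) (\<iota> y) = dist x y"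
  shows "\<exists>s t. (s = 1 \<or> s = -1) \<and> (\<forall>x. \<iota> x = s * x + t)"
proof -
  define t where "t = \<iota> 0"
  define s where "s = \<iota> 1 - \<iota> 0"
  have "\<bar>s\<bar> = 1" using iso[rule_format, of 1 0] by (simp add: s_def dist_real_def)
  then have s2: "s * s = 1" by (metis abs_mult_self_eq mult_1)
  have "\<iota> x = s * x + t" for x
  proof -
    define u where "u = \<iota> x - t"
    have "\<bar>u\<bar> = \<bar>x\<bar>" using iso[rule_format, of x 0] by (simp add: u_def t_def dist_real_def)
    then have h1: "u * u = x * x" by (metis abs_mult_self_eq)
    have "\<bar>u - s\<bar> = \<bar>x - 1\<bar>" using iso[rule_format, of x 1] by (simp add: u_def t_def s_def dist_real_def)
    then have h2: "(u - s) * (u - s) = (x - 1) * (x - 1)" by (metis abs_mult_self_eq)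
    have "u * s = x" using h1 h2 s2 by (simp add: algebra_simps)
    then have "u = x * s" using s2 by (metis mult.assoc mult.right_neutral)
    then show ?thesis unfolding u_def by (simp add: mult.commute)
  qed
  moreover have "s = 1 \<or> s = -1" using \<open>\<bar>s\<bar> = 1\<close> by auto
  ultimately show ?thesis by blast
qed

lemma affine_diffeo:
  assumes ab: "(a::real) < b" and s: "s * s = 1" and ab': "a' < b'"
    and K: "(\<lambda>x. s * x + t) -` {a..b} = {a'..b'}"
  shows "diffeo_J {a'..b'} {a..b} (\<lambda>x. s * x + t)"
    "\<And>y. y \<in> {a..b} \<Longrightarrow> the_inv_into {a'..b'} (\<lambda>x. s * x + t) y = s * (y - t)"
proof -
  define \<iota> where "\<iota> = (\<lambda>x::real. s * x + t)"
  have inj: "inj \<iota>" unfolding \<iota>_def inj_def using s by (metis add_right_cancel mult.assoc mult_1)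
  have inv: "\<iota> (s * (y - t)) = y" for y unfolding \<iota>_def using s by (simp add: mult.assoc[symmetric])
  have Kin: "s * (y - t) \<in> {a'..b'}" if "y \<in> {a..b}" for y
    using K inv[of y] that unfolding \<iota>_def by (metis vimageI2 vimage_eq)
  have ti: "the_inv_into {a'..b'} \<iota> y = s * (y - t)" if "y \<in> {a..b}" for y
    by (rule the_inv_into_f_eq[OF inj_on_subset[OF inj subset_UNIV] inv Kin[OF that]])
  show "\<And>y. y \<in> {a..b} \<Longrightarrow> the_inv_into {a'..b'} (\<lambda>x. s * x + t) y = s * (y - t)"
    using ti unfolding \<iota>_def by blast
  have bij: "bij_betw \<iota> {a'..b'} {a..b}"
    unfolding bij_betw_def
  proof
    show "inj_on \<iota> {a'..b'}" using inj inj_on_subset by blast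
    show "\<iota> ` {a'..b'} = {a..b}"
    proof (intro set_eqI iffI)
      fix y assume "y \<in> \<iota> ` {a'..b'}" then show "y \<in> {a..b}" using K unfolding \<iota>_def by auto
    next
      fix y assume "y \<in> {a..b}" then show "y \<in> \<iota> ` {a'..b'}" using Kin inv by (metis image_eqI)
    qed
  qed
  have sm1: "smooth_on_J {a'..b'} \<iota>" unfolding \<iota>_def by (rule smooth_affine[OF ab'])
  have sm2: "smooth_on_J {a..b} (the_inv_into {a'..b'} \<iota>)"
    using smooth_cong[OF ab smooth_affine[OF ab, of s "- s * t"], of "the_inv_into {a'..b'} \<iota>"] ti
    by (simp add: algebra_simps)
  show "diffeo_J {a'..b'} {a..b} (\<lambda>x. s * x + t)"
    using bij sm1 sm2 unfolding diffeo_J_def \<iota>_def by blast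
qed

lemma part_d:
  assumes ab: "a < b" and cc: "c = a \<or> c = b" and fs: "smooth_on_J {a..b} f"
    and ser: "pliable_series a b c k0 cs gs"
    and fsum: "\<forall>x\<in>{a..b}. ((\<lambda>k. cs k * gs k x) has_sum f x) {k0..}"
    and iso: "\<forall>x y. dist (\<iota> x) (\<iota> y) = dist x y"
  shows "pliable (\<iota> -` {a..b}) (inv \<iota> c) (f \<circ> \<iota>)"
proof -
  obtain s t where st: "s = 1 \<or> s = -1" "\<And>x. \<iota> x = s * x + t"
    using isometry_affine[OF iso] by blast
  have ie: "\<iota> = (\<lambda>x. s * x + t)" using st(2) by auto
  have s: "s * s = 1" using st(1) by auto
  obtain a' b' where ab': "a' < b'" and K: "(\<lambda>x. s * x + t) -` {a..b} = {a'..b'}"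
  proof (cases "s = 1")
    case True
    have "(\<lambda>x. s * x + t) -` {a..b} = {a - t..b - t}" using True by auto
    then show ?thesis using that ab by simp
  next
    case False
    then have "s = -1" using st(1) by simp
    then have "(\<lambda>x. s * x + t) -` {a..b} = {t - b..t - a}" by auto
    then show ?thesis using that ab by simp
  qed
  have cJ: "c \<in> {a..b}" using cc ab by auto
  have inj: "inj \<iota>" unfolding ie inj_def using s by (metis add_right_cancel mult.assoc mult_1)
  have "\<iota> (s * (c - t)) = c" unfolding ie using s by (simp add: mult.assoc[symmetric])
  then have invc: "inv \<iota> c = s * (c - t)" by (rule inv_f_eq[OF inj])
  note A = affine_diffeo[OF ab s ab' K]
  have "pliable {a'..b'} (the_inv_into {a'..b'} (\<lambda>x. s * x + t) c) (f \<circ> (\<lambda>x. s * x + t))"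
    by (rule part_e[OF ab cc fs ser fsum A(1)])
  then show ?thesis unfolding ie K A(2)[OF cJ] invc[unfolded ie] .
qed

theorem lemma4p1:
  fixes a b c :: real and k0 :: int and cs :: "int \<Rightarrow> real"
    and gs :: "int \<Rightarrow> real \<Rightarrow> real" and f :: "real \<Rightarrow> real"
  assumes ab: "a < b"
    and c: "c = a \<or> c = b"
    and f_smooth: "smooth_on_J {a..b} f"
    and ser: "pliable_series a b c k0 cs gs"
    and f_sum: "\<forall>x\<in>{a..b}. ((\<lambda>k. cs k * gs k x) has_sum f x) {k0..}"
  shows
    "(\<forall>r. ((\<lambda>l. cr_norm {a..b} r (\<lambda>x. f x - (\<Sum>k\<in>{k0..l}. cs k * gs k x))) \<longlongrightarrow> 0) at_top)
   \<and> (\<forall>r. jderivs {a..b} r f c = 0 \<and>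
          pliable_series a b c k0 cs (\<lambda>k. jderivs {a..b} r (gs k)) \<and>
          (\<forall>x\<in>{a..b}. ((\<lambda>k. cs k * jderivs {a..b} r (gs k) x) has_sum jderivs {a..b} r f x) {k0..}) \<and>
          pliable {a..b} c (jderivs {a..b} r f))
   \<and> (\<forall>h g. smooth_on_J {a..b} h \<and> smooth_on_J {a..b} g \<and> jsupp {a..b} g \<subseteq> {a..b} - {c}
          \<longrightarrow> pliable {a..b} c (\<lambda>x. h x * f x + g x))
   \<and> (\<forall>\<iota>::real \<Rightarrow> real. (\<forall>x y. dist (\<iota> x) (\<iota> y) = dist x y)
          \<longrightarrow> pliable (\<iota> -` {a..b}) (inv \<iota> c) (f \<circ> \<iota>))
   \<and> (\<forall>a' b' (d::real \<Rightarrow> real). diffeo_J {a'..b'} {a..b} d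
          \<longrightarrow> pliable {a'..b'} (the_inv_into {a'..b'} d c) (f \<circ> d))"
proof (intro conjI allI impI)
  have s2: "ser_ii a b c k0 cs gs" using ser pliable_series_iff by blast
  fix r
  show "((\<lambda>l. cr_norm {a..b} r (\<lambda>x. f x - (\<Sum>k\<in>{k0..l}. cs k * gs k x))) \<longlongrightarrow> 0) at_top"
    by (rule part_a[OF ab s2 f_smooth f_sum])
next
  fix r
  note B = part_b[OF ab c ser f_smooth f_sum, of r]
  show "jderivs {a..b} r f c = 0" using B by blast
  show "pliable_series a b c k0 cs (\<lambda>k. jderivs {a..b} r (gs k))" using B by blast
  show "\<forall>x\<in>{a..b}. ((\<lambda>k. cs k * jderivs {a..b} r (gs k) x) has_sum jderivs {a..b} r f x) {k0..}"
    using B by blast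
  show "pliable {a..b} c (jderivs {a..b} r f)"
    unfolding pliable_def using B ab c smooth_jderivs[OF f_smooth, of r] by blast
next
  fix h g
  assume "smooth_on_J {a..b} h \<and> smooth_on_J {a..b} g \<and> jsupp {a..b} g \<subseteq> {a..b} - {c}"
  then show "pliable {a..b} c (\<lambda>x. h x * f x + g x)"
    using part_c[OF ab c f_smooth ser f_sum] by blast
next
  fix \<iota> :: "real \<Rightarrow> real"
  assume "\<forall>x y. dist (\<iota> x) (\<iota> y) = dist x y"
  then show "pliable (\<iota> -` {a..b}) (inv \<iota> c) (f \<circ> \<iota>)"
    by (rule part_d[OF ab c f_smooth ser f_sum])
next
  fix a' b' and d :: "real \<Rightarrow> real"
  assume "diffeo_J {a'..b'} {a..b} d"
  then show "pliable {a'..b'} (the_inv_into {a'..b'} d c) (f \<circ> d)"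
    by (rule part_e[OF ab c f_smooth ser f_sum])
qed

end
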